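(* A multiplicity-one-free word of length 5 in the alphabet $\alpha$ is homotopically skew-symmetric if and only if it is contractible or skew-symmetric.
   Context: Fix a set $\alpha$ with an involution $\tau:\alpha\to\alpha$. An $\alpha$-alphabet is a set $\mathcal A$ with a map $A\mapsto|A|\in\alpha$. An étale word over $\alpha$ is a pair $(\mathcal A,w)$ with $\mathcal A$ an $\alpha$-alphabet and $w$ a finite word in letters of $\mathcal A$; étale words are isomorphic if a bijection of alphabets preserving $|\cdot|$ carries one word letterwise to the other. The opposite of $(\mathcal A,w)$ is $(\mathcal A,w^-)$ with $w^-$ the reversed word; its inverse is $(\overline{\mathcal A},w)$ where $\overline{\mathcal A}$ is $\mathcal A$ with projection $A\mapsto\tau(|A|)$; write $\overline w^-$ for the inverse of the opposite. A nanoword is an étale word with $\mathcal A$ finite and every letter occurring exactly twice. Homotopy moves on nanowords ($x,y,z,t$ words in the remaining letters): (1) $(\mathcal A,xAAy)\mapsto(\mathcal A\setminus\{A\},xy)$; (2) $(\mathcal A,xAByBAz)\mapsto(\mathcal A\setminus\{A,B\},xyz)$ if $|B|=\tau(|A|)$; (3) $(\mathcal A,xAByACzBCt)\mapsto(\mathcal A,xBAyCAzCBt)$ if $A,B,C$ distinct with $|A|=|B|=|C|$. Homotopy of nanowords ($\simeq$) is generated by isomorphisms, these moves and inverses. Desingularization: for an étale word $(\mathcal A,w)$ with $m_w(A)$ the number of occurrences of $A$, let $\mathcal A^d=\{A_{i,j}:1\le i<j\le m_w(A)\}$, $|A_{i,j}|=|A|$, and $w^d$ obtained from $w$ by deleting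 letters of multiplicity 1 and replacing the $i$-th occurrence of $A$ ($m=m_w(A)\ge2$) by $A_{1,i}\cdots A_{i-1,i}A_{i,i+1}\cdots A_{i,m}$. An étale word $w$ is contractible if $w^d$ is homotopic to the empty nanoword, and homotopically skew-symmetric if $w^d\simeq\overline{w^d}^-$. An étale word is skew-symmetric if it is isomorphic to $\overline w^-$. A word in the alphabet $\alpha$ is regarded as the étale word $(\alpha,w)$ with identity projection. A word is multiplicity-one-free if every letter occurring in it occurs at least twice. *)

theory Defs
  imports Main
begin

(* An etale word over alpha: an alphabet set Al :: 'b set, a projection p :: 'b => 'a
   (the map A |-> |A|), and a word w :: 'b list with letters in Al. *)

definition etale_iso ::
  "'b set \<Rightarrow> ('b \<Rightarrow> 'a) \<Rightarrow> 'b list \<Rightarrow> 'c set \<Rightarrow> ('c \<Rightarrow> 'a) \<Rightarrow> 'c list \<Rightarrow> bool" where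
  "etale_iso Al p w Al' p' w' \<longleftrightarrow>
     (\<exists>f. bij_betw f Al Al' \<and> (\<forall>x\<in>Al. p' (f x) = p x) \<and> map f w = w')"

(* a word in alpha is the etale word (alpha, w) with identity projection;
   it is skew-symmetric if isomorphic to the inverse of its opposite *)
definition skew_symmetric :: "('a \<Rightarrow> 'a) \<Rightarrow> 'a list \<Rightarrow> bool" where
  "skew_symmetric \<tau> w \<longleftrightarrow> etale_iso UNIV id w UNIV \<tau> (rev w)"

definition mult_one_free :: "'a list \<Rightarrow> bool" where
  "mult_one_free w \<longleftrightarrow> (\<forall>x\<in>set w. count_list w x \<ge> 2)"

(* Nanowords: alphabet = set of letters of w (finite), each occurring exactly twice *)
definition is_nanoword :: "'b list \<Rightarrow> bool" where
  "is_nanoword w \<longleftrightarrow> (\<forall>x\<in>set w. count_list w x = 2)"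

inductive nano_step :: "('a \<Rightarrow> 'a) \<Rightarrow> ('b \<Rightarrow> 'a) \<times> 'b list \<Rightarrow> ('b \<Rightarrow> 'a) \<times> 'b list \<Rightarrow> bool"
  for \<tau> :: "'a \<Rightarrow> 'a" where
  iso: "is_nanoword w \<Longrightarrow> etale_iso (set w) p w (set w') p' w' \<Longrightarrow>
        nano_step \<tau> (p, w) (p', w')"
| move1: "is_nanoword (x @ [A, A] @ y) \<Longrightarrow>
        nano_step \<tau> (p, x @ [A, A] @ y) (p, x @ y)"
| move2: "is_nanoword (x @ [A, B] @ y @ [B, A] @ z) \<Longrightarrow> p B = \<tau> (p A) \<Longrightarrow>
        nano_step \<tau> (p, x @ [A, B] @ y @ [B, A] @ z) (p, x @ y @ z)"
| move3: "is_nanoword (x @ [A, B] @ y @ [A, C] @ z @ [B, C] @ t) \<Longrightarrow>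
        A \<noteq> B \<Longrightarrow> A \<noteq> C \<Longrightarrow> B \<noteq> C \<Longrightarrow> p A = p B \<Longrightarrow> p B = p C \<Longrightarrow>
        nano_step \<tau> (p, x @ [A, B] @ y @ [A, C] @ z @ [B, C] @ t)
                    (p, x @ [B, A] @ y @ [C, A] @ z @ [C, B] @ t)"

definition nano_homotopic :: "('a \<Rightarrow> 'a) \<Rightarrow> ('b \<Rightarrow> 'a) \<times> 'b list \<Rightarrow> ('b \<Rightarrow> 'a) \<times> 'b list \<Rightarrow> bool" where
  "nano_homotopic \<tau> = (\<lambda>u v. nano_step \<tau> u v \<or> nano_step \<tau> v u)\<^sup>*\<^sup>*"

(* Desingularization of an etale word w :: 'b list: the letter A_{i,j} is (A, i, j);
   the k-th position holding the i-th occurrence of A (m = multiplicity of A) is replaced by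
   A_{1,i} ... A_{i-1,i} A_{i,i+1} ... A_{i,m} if m >= 2, and deleted if m = 1. *)
definition desing_letter :: "'b list \<Rightarrow> nat \<Rightarrow> ('b \<times> nat \<times> nat) list" where
  "desing_letter w k =
     (let A = w ! k; i = count_list (take k w) A + 1; m = count_list w A in
      if m < 2 then []
      else map (\<lambda>j. (A, j, i)) [1..<i] @ map (\<lambda>j. (A, i, j)) [i+1..<m+1])"

definition desing :: "'b list \<Rightarrow> ('b \<times> nat \<times> nat) list" where
  "desing w = concat (map (desing_letter w) [0..<length w])"

(* For a word w in alpha (identity projection), w^d has projection A_{i,j} |-> A, i.e. fst. *)
definition contractible :: "('a \<Rightarrow> 'a) \<Rightarrow> 'a list \<Rightarrow> bool" where
  "contractible \<tau> w \<longleftrightarrow> nano_homotopic \<tau> (fst, desing w) (fst, [])"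

definition homot_skew_symmetric :: "('a \<Rightarrow> 'a) \<Rightarrow> 'a list \<Rightarrow> bool" where
  "homot_skew_symmetric \<tau> w \<longleftrightarrow>
     nano_homotopic \<tau> (fst, desing w) (\<tau> \<circ> fst, rev (desing w))"

end

theory Submission
  imports Defs
begin

fun sgs :: "('b \<Rightarrow> int) \<Rightarrow> 'b set \<Rightarrow> 'b list \<Rightarrow> int" where
  "sgs m S [] = 0"
| "sgs m S (c # w) = (if c \<in> S then - m c else m c) + sgs m (insert c S) w"

fun lsc :: "('b \<Rightarrow> int) \<Rightarrow> 'b \<Rightarrow> 'b set \<Rightarrow> bool \<Rightarrow> 'b list \<Rightarrow> int" where
  "lsc m D S st [] = 0"
| "lsc m D S st (c # w) =
     (if c = D then (if st then 0 else lsc m D (insert c S) True w)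
      else (if st then (if c \<in> S then - m c else m c) else 0) + lsc m D (insert c S) st w)"

lemma sgs_append: "sgs m S (u @ v) = sgs m S u + sgs m (S \<union> set u) v"
  by (induction u arbitrary: S) auto

lemma sgs_insert_irrel: "c \<notin> set w \<Longrightarrow> sgs m (insert c S) w = sgs m S w"
proof (induction w arbitrary: S)
  case Nil then show ?case by simp
next
  case (Cons a w)
  have "insert a (insert c S) = insert c (insert a S)" by (rule insert_commute)
  then have "sgs m (insert a (insert c S)) w = sgs m (insert a S) w"
    using Cons by simp
  with Cons show ?case by auto
qed

lemma lsc_out: "D \<notin> set x \<Longrightarrow> lsc m D S False (x @ w) = lsc m D (S \<union> set x) False w"
  by (induction x arbitrary: S) auto

lemma lsc_in: "D \<notin> set y \<Longrightarrow> lsc m D S True (y @ D # z) = sgs m S y"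
  by (induction y arbitrary: S) auto

lemma lsc_decomp:
  "D \<notin> set x \<Longrightarrow> D \<notin> set y \<Longrightarrow> lsc m D S False (x @ D # y @ D # z) = sgs m (insert D (S \<union> set x)) y"
  by (simp add: lsc_out lsc_in)

lemma lsc_insert_irrel: "c \<notin> set w \<Longrightarrow> lsc m D (insert c S) st w = lsc m D S st w"
proof (induction w arbitrary: S st)
  case Nil then show ?case by simp
next
  case (Cons a w)
  have "insert a (insert c S) = insert c (insert a S)" by (rule insert_commute)
  then have "\<And>st. lsc m D (insert a (insert c S)) st w = lsc m D (insert a S) st w"
    using Cons by simp
  with Cons show ?case by auto
qed

lemma lsc_swap:
  assumes "a \<noteq> b" "a \<noteq> D" "b \<noteq> D"
  shows "lsc m D S st (u @ a # b # v) = lsc m D S st (u @ b # a # v)"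
  using assms
proof (induction u arbitrary: S st)
  case Nil then show ?case by (auto simp: insert_commute)
next
  case (Cons c u) then show ?case by auto
qed

lemma lsc_rm1:
  assumes "A \<noteq> D" "A \<notin> S" "A \<notin> set u" "A \<notin> set v"
  shows "lsc m D S st (u @ A # A # v) = lsc m D S st (u @ v)"
  using assms
proof (induction u arbitrary: S st)
  case Nil then show ?case by (simp add: lsc_insert_irrel)
next
  case (Cons c u) then show ?case by auto
qed

lemma lsc_rm2b:
  assumes "A \<noteq> D" "B \<noteq> D" "A \<in> S" "B \<in> S" "A \<notin> set y" "B \<notin> set y" "A \<notin> set z" "B \<notin> set z"
  shows "\<exists>k. lsc m D S st (y @ B # A # z) = lsc m D S st (y @ z) + k * (m A + m B)"
  using assms
proof (induction y arbitrary: S st)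
  case Nil
  then have "insert A (insert B S) = S" by auto
  with Nil show ?case
    by (rule_tac x="if st then -1 else 0" in exI) (auto simp: algebra_simps)
next
  case (Cons c y)
  show ?case
  proof (cases "c = D")
    case True
    show ?thesis
    proof (cases st)
      case True with \<open>c = D\<close> show ?thesis by auto
    next
      case False
      obtain k where "lsc m D (insert c S) True (y @ B # A # z) = lsc m D (insert c S) True (y @ z) + k * (m A + m B)"
        using Cons.IH[of "insert c S" True] Cons.prems by auto
      with False \<open>c = D\<close> show ?thesis by (rule_tac x=k in exI) auto
    qed
  next
    case False
    obtain k where "lsc m D (insert c S) st (y @ B # A # z) = lsc m D (insert c S) st (y @ z) + k * (m A + m B)"
      using Cons.IH[of "insert c S" st] Cons.prems by auto
    with False show ?thesis by (rule_tac x=k in exI) auto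
  qed
qed

lemma lsc_rm2:
  assumes "A \<noteq> D" "B \<noteq> D" "A \<noteq> B" "A \<notin> S" "B \<notin> S" "A \<notin> set u" "B \<notin> set u"
    "A \<notin> set y" "B \<notin> set y" "A \<notin> set z" "B \<notin> set z"
  shows "\<exists>k. lsc m D S st (u @ A # B # y @ B # A # z) = lsc m D S st (u @ y @ z) + k * (m A + m B)"
  using assms
proof (induction u arbitrary: S st)
  case Nil
  obtain k where k: "lsc m D (insert B (insert A S)) st (y @ B # A # z) =
      lsc m D (insert B (insert A S)) st (y @ z) + k * (m A + m B)"
    using lsc_rm2b[of A D B "insert B (insert A S)" y z m st] Nil.prems by auto
  have "lsc m D (insert B (insert A S)) st (y @ z) = lsc m D S st (y @ z)"
    using Nil.prems by (simp add: lsc_insert_irrel)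
  with k Nil.prems show ?case
    by (rule_tac x="k + (if st then 1 else 0)" in exI) (auto simp: algebra_simps)
next
  case (Cons c u)
  show ?case
  proof (cases "c = D")
    case True
    show ?thesis
    proof (cases st)
      case True with \<open>c = D\<close> show ?thesis by auto
    next
      case False
      obtain k where "lsc m D (insert c S) True (u @ A # B # y @ B # A # z) = lsc m D (insert c S) True (u @ y @ z) + k * (m A + m B)"
        using Cons.IH[of "insert c S" True] Cons.prems by auto
      with False \<open>c = D\<close> show ?thesis by (rule_tac x=k in exI) auto
    qed
  next
    case False
    obtain k where "lsc m D (insert c S) st (u @ A # B # y @ B # A # z) = lsc m D (insert c S) st (u @ y @ z) + k * (m A + m B)"
      using Cons.IH[of "insert c S" st] Cons.prems by auto
    with False show ?thesis by (rule_tac x=k in exI) auto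
  qed
qed

lemma lsc_map:
  assumes "inj_on f (insert D (S \<union> set w))" "\<forall>c\<in>set w. m' (f c) = m c"
  shows "lsc m' (f D) (f ` S) st (map f w) = lsc m D S st w"
  using assms
proof (induction w arbitrary: S st)
  case Nil then show ?case by simp
next
  case (Cons c w)
  have inj: "inj_on f (insert D (insert c S \<union> set w))" using Cons.prems(1) by (simp add: insert_commute)
  have e1: "(f c = f D) = (c = D)"
    using Cons.prems(1) inj_on_eq_iff[of f "insert D (S \<union> set (c # w))" c D] by simp
  have e2: "(f c \<in> f ` S) = (c \<in> S)"
  proof
    assume "f c \<in> f ` S"
    then obtain s where "s \<in> S" "f c = f s" by auto
    moreover have "c \<in> insert D (S \<union> set (c # w))" "s \<in> insert D (S \<union> set (c # w))"
      using \<open>s \<in> S\<close> by auto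
    ultimately show "c \<in> S" using Cons.prems(1) inj_on_eq_iff[of f "insert D (S \<union> set (c # w))" c s] by simp
  qed auto
  have IH: "\<And>st. lsc m' (f D) (f ` insert c S) st (map f w) = lsc m D (insert c S) st w"
  proof -
    fix st
    have "inj_on f (insert D (insert c S \<union> set w))" by (rule inj)
    moreover have "\<forall>c\<in>set w. m' (f c) = m c" using Cons.prems(2) by simp
    ultimately have "lsc m' (f D) (f ` insert c S) st (map f w) = lsc m D (insert c S) st w"
      by (rule Cons.IH)
    then show "lsc m' (f D) (f ` insert c S) st (map f w) = lsc m D (insert c S) st w" .
  qed
  have IH': "\<And>st. lsc m' (f D) (insert (f c) (f ` S)) st (map f w) = lsc m D (insert c S) st w"
    using IH by simp
  have mc: "m' (f c) = m c" using Cons.prems(2) by simp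
  show ?case by (simp only: list.map lsc.simps e1 e2 IH' mc)
qed

definition key :: "('b \<Rightarrow> int) \<Rightarrow> int \<Rightarrow> 'b list \<Rightarrow> 'b \<Rightarrow> int" where
  "key m M w D = lsc m D {} False w mod M"

definition PiF :: "('b \<Rightarrow> int \<Rightarrow> int) \<Rightarrow> 'b list \<Rightarrow> int \<Rightarrow> int" where
  "PiF g w = foldr (\<lambda>c f. g c \<circ> f) w id"

lemma Pi_Nil[simp]: "PiF g [] = id" by (simp add: PiF_def)
lemma Pi_Cons[simp]: "PiF g (c # w) = g c \<circ> PiF g w" by (simp add: PiF_def)
lemma Pi_append: "PiF g (u @ v) = PiF g u \<circ> PiF g v"
  by (induction u) (simp_all add: o_assoc)
lemma Pi_cong: "(\<forall>c\<in>set w. g c = h c) \<Longrightarrow> PiF g w = PiF h w"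
  by (induction w) auto
lemma Pi_map: "PiF g (map f w) = PiF (g \<circ> f) w"
  by (induction w) auto

definition Finv :: "('a \<Rightarrow> int \<Rightarrow> int \<Rightarrow> int) \<Rightarrow> ('a \<Rightarrow> int) \<Rightarrow> int \<Rightarrow> ('b \<Rightarrow> 'a) \<Rightarrow> 'b list \<Rightarrow> int \<Rightarrow> int" where
  "Finv \<phi> \<mu> M p w = PiF (\<lambda>c. \<phi> (p c) (key (\<mu> \<circ> p) M w c)) w"

lemma nw_count: "is_nanoword w \<Longrightarrow> c \<in> set w \<Longrightarrow> count_list w c = 2"
  by (simp add: is_nanoword_def)

lemma mod_absorb: "(s::int) mod M = 0 \<Longrightarrow> (L + k * s) mod M = L mod M"
  by (metis add.right_neutral mod_add_right_eq mod_mult_right_eq mult_zero_right)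

lemma Finv_step:
  assumes inv: "\<tau> \<circ> \<tau> = id"
    and muM: "\<forall>x. (\<mu> (\<tau> x) + \<mu> x) mod M = 0"
    and ph0: "\<forall>x. \<phi> x 0 \<circ> \<phi> x 0 = id"
    and phinv: "\<forall>x k. \<phi> (\<tau> x) k \<circ> \<phi> x k = id"
    and phc: "\<forall>x k k'. \<phi> x k \<circ> \<phi> x k' = \<phi> x k' \<circ> \<phi> x k"
    and st: "nano_step \<tau> (p, w) (p', w')"
  shows "Finv \<phi> \<mu> M p' w' = Finv \<phi> \<mu> M p w"
  using st
proof (cases rule: nano_step.cases)
  case (iso)
  then obtain f where f: "bij_betw f (set w) (set w')" "\<forall>x\<in>set w. p' (f x) = p x" "map f w = w'"
    unfolding etale_iso_def by blast
  have inj: "inj_on f (set w)" using f(1) by (simp add: bij_betw_def)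
  have k: "key (\<mu> \<circ> p') M w' (f c) = key (\<mu> \<circ> p) M w c" if c: "c \<in> set w" for c
  proof -
    have i: "inj_on f (insert c ({} \<union> set w))" using inj c by (simp add: insert_absorb)
    have "lsc (\<mu> \<circ> p') (f c) (f ` {}) False (map f w) = lsc (\<mu> \<circ> p) c {} False w"
      by (rule lsc_map[OF i]) (use f(2) in auto)
    then show ?thesis using f(3) by (simp add: key_def)
  qed
  show ?thesis unfolding Finv_def
    by (simp add: f(3)[symmetric] Pi_map) (rule Pi_cong, use k f(2) f(3) in auto)
next
  case (move1 x A y)
  let ?m = "\<mu> \<circ> p"
  have c: "count_list (x @ [A, A] @ y) A = 2" using move1 nw_count by fastforce
  then have nA: "A \<notin> set x" "A \<notin> set y" by (auto simp: count_list_0_iff[symmetric])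
  have k: "key ?m M (x @ y) c = key ?m M (x @ [A, A] @ y) c" if "c \<in> set (x @ y)" for c
  proof -
    have "c \<noteq> A" using that nA by auto
    then show ?thesis unfolding key_def using lsc_rm1[of A c "{}" x y ?m False] nA by simp
  qed
  have kA: "key ?m M (x @ A # A # y) A = 0"
    unfolding key_def using lsc_decomp[of A x "[]" ?m "{}" y] nA by simp
  let ?g = "\<lambda>c. \<phi> (p c) (key ?m M (x @ [A, A] @ y) c)"
  have "Finv \<phi> \<mu> M p (x @ y) = PiF ?g (x @ y)"
    unfolding Finv_def by (rule Pi_cong) (use k in auto)
  also have "\<dots> = PiF ?g x \<circ> PiF ?g y" by (simp add: Pi_append)
  also have "\<dots> = PiF ?g x \<circ> (\<phi> (p A) 0 \<circ> \<phi> (p A) 0) \<circ> PiF ?g y" using ph0 by simp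
  also have "\<dots> = Finv \<phi> \<mu> M p (x @ [A, A] @ y)"
    unfolding Finv_def by (simp add: Pi_append kA o_assoc)
  finally show ?thesis using move1 by simp
next
  case (move2 x A B y z)
  let ?m = "\<mu> \<circ> p"
  let ?w = "x @ A # B # y @ B # A # z"
  have w: "w = ?w" using move2 by simp
  have cA: "count_list ?w A = 2" "count_list ?w B = 2" using move2 nw_count by fastforce+
  have AB: "A \<noteq> B"
  proof
    assume "A = B"
    then have "count_list ?w A \<ge> 4" by simp
    then show False using cA(1) by simp
  qed
  have nA: "A \<notin> set x" "A \<notin> set y" "A \<notin> set z" "B \<notin> set x" "B \<notin> set y" "B \<notin> set z"
    using cA AB by (simp_all add: count_list_0_iff[symmetric])
  have pB: "p B = \<tau> (p A)" using move2 by simp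
  have s0: "(?m A + ?m B) mod M = 0" using muM pB by (simp add: add.commute)
  have k: "key ?m M (x @ y @ z) c = key ?m M ?w c" if "c \<in> set (x @ y @ z)" for c
  proof -
    have "c \<noteq> A" "c \<noteq> B" using that nA by auto
    then obtain j where "lsc ?m c {} False ?w = lsc ?m c {} False (x @ y @ z) + j * (?m A + ?m B)"
      using lsc_rm2[of A c B "{}" x y z ?m False] nA AB by auto
    then show ?thesis unfolding key_def using mod_absorb[OF s0] by simp
  qed
  have kAB: "key ?m M ?w B = key ?m M ?w A"
  proof -
    have "lsc ?m A {} False (x @ A # (B # y @ [B]) @ A # z) = sgs ?m (insert A ({} \<union> set x)) (B # y @ [B])"
      by (rule lsc_decomp) (use nA AB in auto)
    also have "\<dots> = sgs ?m (insert B (insert A (set x))) y"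
      using nA AB by (simp add: sgs_append)
    finally have a: "lsc ?m A {} False ?w = sgs ?m (insert B (insert A (set x))) y" by simp
    have "lsc ?m B {} False ((x @ [A]) @ B # y @ B # (A # z)) = sgs ?m (insert B ({} \<union> set (x @ [A]))) y"
      by (rule lsc_decomp) (use nA AB in auto)
    then have b: "lsc ?m B {} False ?w = sgs ?m (insert B (insert A (set x))) y" by simp
    show ?thesis using a b by (simp add: key_def)
  qed
  let ?g = "\<lambda>c. \<phi> (p c) (key ?m M ?w c)"
  have tt: "\<tau> (\<tau> (p A)) = p A" using inv by (metis comp_apply id_apply)
  have i1: "?g A \<circ> ?g B = id"
    using phinv[rule_format, of "\<tau> (p A)" "key ?m M ?w A"] pB kAB tt by simp
  have i2: "?g B \<circ> ?g A = id"
    using phinv[rule_format, of "p A" "key ?m M ?w A"] pB kAB by simp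
  have "Finv \<phi> \<mu> M p (x @ y @ z) = PiF ?g (x @ y @ z)"
    unfolding Finv_def by (rule Pi_cong) (use k in auto)
  also have "\<dots> = PiF ?g x \<circ> id \<circ> PiF ?g y \<circ> id \<circ> PiF ?g z" by (simp add: Pi_append o_assoc)
  also have "\<dots> = PiF ?g x \<circ> (?g A \<circ> ?g B) \<circ> PiF ?g y \<circ> (?g B \<circ> ?g A) \<circ> PiF ?g z"
    by (simp only: i1 i2)
  also have "\<dots> = Finv \<phi> \<mu> M p ?w"
    unfolding Finv_def by (simp add: Pi_append o_assoc)
  finally show ?thesis using move2 by simp
next
  case (move3 x A B y C z t)
  let ?m = "\<mu> \<circ> p"
  let ?w = "x @ A # B # y @ A # C # z @ B # C # t"
  let ?v = "x @ B # A # y @ C # A # z @ C # B # t"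
  have w: "w = ?w" "w' = ?v" "p' = p" using move3 by simp_all
  have d: "A \<noteq> B" "A \<noteq> C" "B \<noteq> C" using move3 by simp_all
  have cA: "count_list ?w A = 2" "count_list ?w B = 2" "count_list ?w C = 2"
    using move3 nw_count by fastforce+
  have nA: "A \<notin> set x" "A \<notin> set y" "A \<notin> set z" "A \<notin> set t"
     "B \<notin> set x" "B \<notin> set y" "B \<notin> set z" "B \<notin> set t"
     "C \<notin> set x" "C \<notin> set y" "C \<notin> set z" "C \<notin> set t"
    using cA d by (simp_all add: count_list_0_iff[symmetric])
  have pp: "p B = p A" "p C = p A" using move3 by simp_all
  have k: "lsc ?m c {} False ?v = lsc ?m c {} False ?w" if "c \<noteq> A" "c \<noteq> B" "c \<noteq> C" for c
  proof -
    have "lsc ?m c {} False ?w = lsc ?m c {} False (x @ B # A # (y @ A # C # z @ B # C # t))"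
      using lsc_swap[of A B c ?m "{}" False x "y @ A # C # z @ B # C # t"] d that by simp
    also have "\<dots> = lsc ?m c {} False ((x @ B # A # y) @ C # A # (z @ B # C # t))"
      using lsc_swap[of A C c ?m "{}" False "x @ B # A # y" "z @ B # C # t"] d that by simp
    also have "\<dots> = lsc ?m c {} False ((x @ B # A # y @ C # A # z) @ C # B # t)"
      using lsc_swap[of B C c ?m "{}" False "x @ B # A # y @ C # A # z" t] d that by simp
    finally show ?thesis by simp
  qed
  have kA: "lsc ?m A {} False ?v = lsc ?m A {} False ?w"
  proof -
    have "lsc ?m A {} False (x @ A # (B # y) @ A # (C # z @ B # C # t)) = sgs ?m (insert A ({} \<union> set x)) (B # y)"
      by (rule lsc_decomp) (use nA d in auto)
    then have a: "lsc ?m A {} False ?w = ?m B + sgs ?m (insert B (insert A (set x))) y"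
      using nA d by simp
    have "lsc ?m A {} False ((x @ [B]) @ A # (y @ [C]) @ A # (z @ C # B # t)) = sgs ?m (insert A ({} \<union> set (x @ [B]))) (y @ [C])"
      by (rule lsc_decomp) (use nA d in auto)
    then have b: "lsc ?m A {} False ?v = sgs ?m (insert A (insert B (set x))) y + ?m C"
      using nA d by (simp add: sgs_append)
    show ?thesis using a b pp by (simp add: insert_commute)
  qed
  have kB: "lsc ?m B {} False ?v = lsc ?m B {} False ?w"
  proof -
    have "lsc ?m B {} False ((x @ [A]) @ B # (y @ A # C # z) @ B # (C # t)) = sgs ?m (insert B ({} \<union> set (x @ [A]))) (y @ A # C # z)"
      by (rule lsc_decomp) (use nA d in auto)
    then have a: "lsc ?m B {} False ?w = sgs ?m (insert B (insert A (set x))) y - ?m A + ?m C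
       + sgs ?m (insert C (insert A (insert B (insert A (set x)) \<union> set y))) z"
      using nA d by (simp add: sgs_append)
    have "lsc ?m B {} False (x @ B # (A # y @ C # A # z @ [C]) @ B # t) = sgs ?m (insert B ({} \<union> set x)) (A # y @ C # A # z @ [C])"
      by (rule lsc_decomp) (use nA d in auto)
    then have b: "lsc ?m B {} False ?v = ?m A + sgs ?m (insert A (insert B (set x))) y + ?m C - ?m A
       + sgs ?m (insert A (insert C (insert A (insert B (set x)) \<union> set y))) z - ?m C"
      using nA d by (simp add: sgs_append)
    have e: "insert C (insert A (insert B (insert A (set x)) \<union> set y)) = insert A (insert C (insert A (insert B (set x)) \<union> set y))"
      by auto
    show ?thesis using a b pp e by (simp add: insert_commute)
  qed
  have kC: "lsc ?m C {} False ?v = lsc ?m C {} False ?w"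
  proof -
    have "lsc ?m C {} False ((x @ A # B # y @ [A]) @ C # (z @ [B]) @ C # t) = sgs ?m (insert C ({} \<union> set (x @ A # B # y @ [A]))) (z @ [B])"
      by (rule lsc_decomp) (use nA d in auto)
    moreover have "insert C (insert A (insert B (insert A (set x \<union> set y)))) = insert C (insert A (insert B (set x \<union> set y)))"
      by auto
    ultimately have a: "lsc ?m C {} False ?w = sgs ?m (insert C (insert A (insert B (set x \<union> set y)))) z - ?m B"
      using nA d by (simp add: sgs_append)
    have "lsc ?m C {} False ((x @ B # A # y) @ C # (A # z) @ C # (B # t)) = sgs ?m (insert C ({} \<union> set (x @ B # A # y))) (A # z)"
      by (rule lsc_decomp) (use nA d in auto)
    then have b: "lsc ?m C {} False ?v = - ?m A + sgs ?m (insert A (insert C (insert B (insert A (set x \<union> set y))))) z"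
      using nA d by simp
    have e: "insert A (insert C (insert B (insert A (set x \<union> set y)))) = insert C (insert A (insert B (set x \<union> set y)))"
      by auto
    show ?thesis using a b pp e by simp
  qed
  have kall: "key ?m M ?v c = key ?m M ?w c" for c
    unfolding key_def using k kA kB kC by (cases "c = A \<or> c = B \<or> c = C") auto
  let ?g = "\<lambda>c. \<phi> (p c) (key ?m M ?w c)"
  have c1: "?g A \<circ> ?g B = ?g B \<circ> ?g A" using phc pp by simp
  have c2: "?g A \<circ> ?g C = ?g C \<circ> ?g A" using phc pp by simp
  have c3: "?g B \<circ> ?g C = ?g C \<circ> ?g B" using phc pp by simp
  have "Finv \<phi> \<mu> M p ?v = PiF ?g ?v"
    unfolding Finv_def using kall by simp
  also have "\<dots> = PiF ?g x \<circ> (?g B \<circ> ?g A) \<circ> PiF ?g y \<circ> (?g C \<circ> ?g A) \<circ> PiF ?g z \<circ> (?g C \<circ> ?g B) \<circ> PiF ?g t"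
    by (simp add: Pi_append o_assoc)
  also have "\<dots> = PiF ?g x \<circ> (?g A \<circ> ?g B) \<circ> PiF ?g y \<circ> (?g A \<circ> ?g C) \<circ> PiF ?g z \<circ> (?g B \<circ> ?g C) \<circ> PiF ?g t"
    by (simp only: c1 c2 c3)
  also have "\<dots> = Finv \<phi> \<mu> M p ?w"
    unfolding Finv_def by (simp add: Pi_append o_assoc)
  finally show ?thesis using w by simp
qed

lemma tt: "\<tau> \<circ> \<tau> = id \<Longrightarrow> \<tau> (\<tau> x) = x"
  by (metis comp_apply id_apply)

lemma nh_refl: "nano_homotopic \<tau> u u"
  by (simp add: nano_homotopic_def)

lemma nh_fwd: "nano_step \<tau> u v \<Longrightarrow> nano_homotopic \<tau> u v"
  unfolding nano_homotopic_def by (rule r_into_rtranclp) simp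

lemma nh_bwd: "nano_step \<tau> v u \<Longrightarrow> nano_homotopic \<tau> u v"
  unfolding nano_homotopic_def by (rule r_into_rtranclp) simp

lemma nh_trans: "nano_homotopic \<tau> u v \<Longrightarrow> nano_homotopic \<tau> v w \<Longrightarrow> nano_homotopic \<tau> u w"
  unfolding nano_homotopic_def by (rule rtranclp_trans)

lemma nh_sym: "nano_homotopic \<tau> u v \<Longrightarrow> nano_homotopic \<tau> v u"
proof -
  let ?r = "\<lambda>u v. nano_step \<tau> u v \<or> nano_step \<tau> v u"
  have e: "?r\<inverse>\<inverse> = ?r" by (auto simp: fun_eq_iff)
  assume "nano_homotopic \<tau> u v"
  then have "?r\<^sup>*\<^sup>* u v" by (simp add: nano_homotopic_def)
  then have "(?r\<inverse>\<inverse>)\<^sup>*\<^sup>* v u" by (rule rtranclp_converseI)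
  then show ?thesis by (simp add: nano_homotopic_def e)
qed

definition good :: "('a \<Rightarrow> 'a) \<Rightarrow> ('a \<Rightarrow> int \<Rightarrow> int \<Rightarrow> int) \<Rightarrow> ('a \<Rightarrow> int) \<Rightarrow> int \<Rightarrow> bool" where
  "good \<tau> \<phi> \<mu> M \<longleftrightarrow> (\<forall>x. (\<mu> (\<tau> x) + \<mu> x) mod M = 0) \<and> (\<forall>x. \<phi> x 0 \<circ> \<phi> x 0 = id)
     \<and> (\<forall>x k. \<phi> (\<tau> x) k \<circ> \<phi> x k = id) \<and> (\<forall>x k k'. \<phi> x k \<circ> \<phi> x k' = \<phi> x k' \<circ> \<phi> x k)"

lemma Finv_homot:
  assumes inv: "\<tau> \<circ> \<tau> = id" and g: "good \<tau> \<phi> \<mu> M"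
    and h: "nano_homotopic \<tau> u v"
  shows "Finv \<phi> \<mu> M (fst v) (snd v) = Finv \<phi> \<mu> M (fst u) (snd u)"
proof -
  have st: "Finv \<phi> \<mu> M (fst b) (snd b) = Finv \<phi> \<mu> M (fst a) (snd a)" if "nano_step \<tau> a b" for a b
  proof -
    have "nano_step \<tau> (fst a, snd a) (fst b, snd b)" using that by simp
    then show ?thesis using Finv_step[OF inv] g unfolding good_def by blast
  qed
  from h have "(\<lambda>u v. nano_step \<tau> u v \<or> nano_step \<tau> v u)\<^sup>*\<^sup>* u v" by (simp add: nano_homotopic_def)
  then show ?thesis
  proof (induction rule: rtranclp_induct)
    case base then show ?case by simp
  next
    case (step y z)
    then show ?case using st[of y z] st[of z y] by auto
  qed
qed

lemma nw_rev: "is_nanoword w \<Longrightarrow> is_nanoword (rev w)"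
  by (simp add: is_nanoword_def)

lemma nano_step_rev:
  assumes inv: "\<tau> \<circ> \<tau> = id" and st: "nano_step \<tau> (p, w) (p', w')"
  shows "nano_step \<tau> (\<tau> \<circ> p, rev w) (\<tau> \<circ> p', rev w')"
  using st
proof (cases rule: nano_step.cases)
  case iso
  then obtain f where f: "bij_betw f (set w) (set w')" "\<forall>x\<in>set w. p' (f x) = p x" "map f w = w'"
    unfolding etale_iso_def by blast
  have "is_nanoword (rev w)" using iso by (simp add: is_nanoword_def)
  moreover have "etale_iso (set (rev w)) (\<tau> \<circ> p) (rev w) (set (rev w')) (\<tau> \<circ> p') (rev w')"
    unfolding etale_iso_def using f by (rule_tac x=f in exI) (auto simp: rev_map[symmetric])
  ultimately show ?thesis by (rule nano_step.iso)
next
  case (move1 x A y)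
  have "is_nanoword (rev w)" by (rule nw_rev) (use move1 in simp)
  then have "is_nanoword (rev y @ [A, A] @ rev x)" using move1 by simp
  then have "nano_step \<tau> (\<tau> \<circ> p, rev y @ [A, A] @ rev x) (\<tau> \<circ> p, rev y @ rev x)" by (rule nano_step.move1)
  then show ?thesis using move1 by simp
next
  case (move2 x A B y z)
  have "is_nanoword (rev w)" by (rule nw_rev) (use move2 in simp)
  then have "is_nanoword (rev z @ [A, B] @ rev y @ [B, A] @ rev x)" using move2 by simp
  moreover have "(\<tau> \<circ> p) B = \<tau> ((\<tau> \<circ> p) A)" using move2 tt[OF inv] by simp
  ultimately have "nano_step \<tau> (\<tau> \<circ> p, rev z @ [A, B] @ rev y @ [B, A] @ rev x) (\<tau> \<circ> p, rev z @ rev y @ rev x)"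
    by (rule nano_step.move2)
  then show ?thesis using move2 by simp
next
  case (move3 x A B y C z t)
  have "is_nanoword (rev w)" by (rule nw_rev) (use move3 in simp)
  then have "is_nanoword (rev t @ [C, B] @ rev z @ [C, A] @ rev y @ [B, A] @ rev x)" using move3 by simp
  then have "nano_step \<tau> (\<tau> \<circ> p, rev t @ [C, B] @ rev z @ [C, A] @ rev y @ [B, A] @ rev x)
                         (\<tau> \<circ> p, rev t @ [B, C] @ rev z @ [A, C] @ rev y @ [A, B] @ rev x)"
    by (rule nano_step.move3) (use move3 in auto)
  then show ?thesis using move3 by simp
qed

lemma nh_rev:
  assumes inv: "\<tau> \<circ> \<tau> = id" and h: "nano_homotopic \<tau> u v"
  shows "nano_homotopic \<tau> (\<tau> \<circ> fst u, rev (snd u)) (\<tau> \<circ> fst v, rev (snd v))"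
proof -
  have st: "nano_step \<tau> (\<tau> \<circ> fst a, rev (snd a)) (\<tau> \<circ> fst b, rev (snd b))" if "nano_step \<tau> a b" for a b
  proof -
    have "nano_step \<tau> (fst a, snd a) (fst b, snd b)" using that by simp
    then show ?thesis by (rule nano_step_rev[OF inv])
  qed
  from h have "(\<lambda>u v. nano_step \<tau> u v \<or> nano_step \<tau> v u)\<^sup>*\<^sup>* u v" by (simp add: nano_homotopic_def)
  then show ?thesis
  proof (induction rule: rtranclp_induct)
    case base then show ?case by (rule nh_refl)
  next
    case (step y z)
    from step.hyps(2) have "nano_homotopic \<tau> (\<tau> \<circ> fst y, rev (snd y)) (\<tau> \<circ> fst z, rev (snd z))"
      using st[of y z] st[of z y] nh_fwd nh_bwd by blast
    then show ?case using step.IH nh_trans by blast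
  qed
qed

lemma HS_of_C:
  assumes inv: "\<tau> \<circ> \<tau> = id" and c: "contractible \<tau> w"
  shows "homot_skew_symmetric \<tau> w"
proof -
  have h: "nano_homotopic \<tau> (fst, desing w) (fst, [])" using c by (simp add: contractible_def)
  have h2: "nano_homotopic \<tau> (\<tau> \<circ> fst, rev (desing w)) (\<tau> \<circ> fst, [])"
    using nh_rev[OF inv h] by simp
  have "nano_step \<tau> (fst, []) (\<tau> \<circ> fst, [])"
    by (rule nano_step.iso) (auto simp: is_nanoword_def etale_iso_def)
  then have h3: "nano_homotopic \<tau> (fst, []) (\<tau> \<circ> fst, [])" by (rule nh_fwd)
  show ?thesis unfolding homot_skew_symmetric_def
    using nh_trans[OF h nh_trans[OF h3 nh_sym[OF h2]]] .
qed

lemma notHS_inv: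
  assumes inv: "\<tau> \<circ> \<tau> = id" and g: "good \<tau> \<phi> \<mu> M"
    and d: "Finv \<phi> \<mu> M fst (desing w) 0 \<noteq> Finv \<phi> \<mu> M (\<tau> \<circ> fst) (rev (desing w)) 0"
  shows "\<not> homot_skew_symmetric \<tau> w"
proof
  assume "homot_skew_symmetric \<tau> w"
  then have "nano_homotopic \<tau> (fst, desing w) (\<tau> \<circ> fst, rev (desing w))"
    by (simp add: homot_skew_symmetric_def)
  from Finv_homot[OF inv g this] d show False by simp
qed

lemma skew_iff:
  assumes inv: "\<tau> \<circ> \<tau> = id"
  shows "skew_symmetric \<tau> w \<longleftrightarrow> map \<tau> w = rev w"
proof
  assume "skew_symmetric \<tau> w"
  then obtain f where f: "\<forall>x. \<tau> (f x) = x" "map f w = rev w"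
    unfolding skew_symmetric_def etale_iso_def by auto
  have "f x = \<tau> x" for x using f(1) tt[OF inv] by metis
  then show "map \<tau> w = rev w" using f(2) by (metis ext)
next
  assume m: "map \<tau> w = rev w"
  have "bij \<tau>" by (rule o_bij[of \<tau>]) (use inv in auto)
  then show "skew_symmetric \<tau> w"
    unfolding skew_symmetric_def etale_iso_def using m tt[OF inv]
    by (rule_tac x=\<tau> in exI) auto
qed

lemma final_notHS:
  "\<tau> \<circ> \<tau> = id \<Longrightarrow> \<not> homot_skew_symmetric \<tau> w \<Longrightarrow> map \<tau> w \<noteq> rev w \<Longrightarrow>
   homot_skew_symmetric \<tau> w \<longleftrightarrow> contractible \<tau> w \<or> skew_symmetric \<tau> w"
  using HS_of_C skew_iff by blast

lemma final_C:
  "\<tau> \<circ> \<tau> = id \<Longrightarrow> contractible \<tau> w \<Longrightarrow>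
   homot_skew_symmetric \<tau> w \<longleftrightarrow> contractible \<tau> w \<or> skew_symmetric \<tau> w"
  using HS_of_C by blast

lemma final_S:
  "\<tau> \<circ> \<tau> = id \<Longrightarrow> homot_skew_symmetric \<tau> w \<Longrightarrow> map \<tau> w = rev w \<Longrightarrow>
   homot_skew_symmetric \<tau> w \<longleftrightarrow> contractible \<tau> w \<or> skew_symmetric \<tau> w"
  using skew_iff by blast

lemma HS_iso:
  assumes nw: "is_nanoword (desing w)"
    and ff: "\<forall>x\<in>set (desing w). f (f x) = x" and fp: "\<forall>x\<in>set (desing w). \<tau> (fst (f x)) = fst x"
    and fm: "map f (desing w) = rev (desing w)"
  shows "homot_skew_symmetric \<tau> w"
proof -
  have "inj_on f (set (desing w))" by (rule inj_on_inverseI[of _ f]) (use ff in auto)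
  moreover have "f ` set (desing w) = set (rev (desing w))" using fm by (metis set_map)
  ultimately have "bij_betw f (set (desing w)) (set (rev (desing w)))" by (simp add: bij_betw_def)
  then have "etale_iso (set (desing w)) fst (desing w) (set (rev (desing w))) (\<tau> \<circ> fst) (rev (desing w))"
    unfolding etale_iso_def using fp fm by (rule_tac x=f in exI) auto
  then have "nano_step \<tau> (fst, desing w) (\<tau> \<circ> fst, rev (desing w))"
    by (rule nano_step.iso[OF nw])
  then show ?thesis unfolding homot_skew_symmetric_def by (rule nh_fwd)
qed

lemma d_AAAAA: "desing [A,A,A,A,A] = [(A,1,2),(A,1,3),(A,1,4),(A,1,5),(A,1,2),(A,2,3),(A,2,4),(A,2,5),(A,1,3),(A,2,3),(A,3,4),(A,3,5),(A,1,4),(A,2,4),(A,3,4),(A,4,5),(A,1,5),(A,2,5),(A,3,5),(A,4,5)]"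
  by (simp add: desing_def desing_letter_def Let_def upt_rec)

lemma d_AAABB: "A \<noteq> B \<Longrightarrow> desing [A,A,A,B,B] = [(A,1,2),(A,1,3),(A,1,2),(A,2,3),(A,1,3),(A,2,3),(B,1,2),(B,1,2)]"
  by (simp add: desing_def desing_letter_def Let_def upt_rec)

lemma d_AABAB: "A \<noteq> B \<Longrightarrow> desing [A,A,B,A,B] = [(A,1,2),(A,1,3),(A,1,2),(A,2,3),(B,1,2),(A,1,3),(A,2,3),(B,1,2)]"
  by (simp add: desing_def desing_letter_def Let_def upt_rec)

lemma d_AABBA: "A \<noteq> B \<Longrightarrow> desing [A,A,B,B,A] = [(A,1,2),(A,1,3),(A,1,2),(A,2,3),(B,1,2),(B,1,2),(A,1,3),(A,2,3)]"
  by (simp add: desing_def desing_letter_def Let_def upt_rec)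

lemma d_ABAAB: "A \<noteq> B \<Longrightarrow> desing [A,B,A,A,B] = [(A,1,2),(A,1,3),(B,1,2),(A,1,2),(A,2,3),(A,1,3),(A,2,3),(B,1,2)]"
  by (simp add: desing_def desing_letter_def Let_def upt_rec)

lemma d_ABABA: "A \<noteq> B \<Longrightarrow> desing [A,B,A,B,A] = [(A,1,2),(A,1,3),(B,1,2),(A,1,2),(A,2,3),(B,1,2),(A,1,3),(A,2,3)]"
  by (simp add: desing_def desing_letter_def Let_def upt_rec)

lemma d_ABBAA: "A \<noteq> B \<Longrightarrow> desing [A,B,B,A,A] = [(A,1,2),(A,1,3),(B,1,2),(B,1,2),(A,1,2),(A,2,3),(A,1,3),(A,2,3)]"
  by (simp add: desing_def desing_letter_def Let_def upt_rec)

lemma d_BAAAB: "A \<noteq> B \<Longrightarrow> desing [B,A,A,A,B] = [(B,1,2),(A,1,2),(A,1,3),(A,1,2),(A,2,3),(A,1,3),(A,2,3),(B,1,2)]"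
  by (simp add: desing_def desing_letter_def Let_def upt_rec)

lemma d_BAABA: "A \<noteq> B \<Longrightarrow> desing [B,A,A,B,A] = [(B,1,2),(A,1,2),(A,1,3),(A,1,2),(A,2,3),(B,1,2),(A,1,3),(A,2,3)]"
  by (simp add: desing_def desing_letter_def Let_def upt_rec)

lemma d_BABAA: "A \<noteq> B \<Longrightarrow> desing [B,A,B,A,A] = [(B,1,2),(A,1,2),(A,1,3),(B,1,2),(A,1,2),(A,2,3),(A,1,3),(A,2,3)]"
  by (simp add: desing_def desing_letter_def Let_def upt_rec)

lemma d_BBAAA: "A \<noteq> B \<Longrightarrow> desing [B,B,A,A,A] = [(B,1,2),(B,1,2),(A,1,2),(A,1,3),(A,1,2),(A,2,3),(A,1,3),(A,2,3)]"
  by (simp add: desing_def desing_letter_def Let_def upt_rec)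


definition r1 :: "int \<Rightarrow> int" where "r1 n = 1 - n"
definition tp :: "int \<Rightarrow> int" where "tp n = n + 1"
definition tm :: "int \<Rightarrow> int" where "tm n = n - 1"

lemma r1r1[simp]: "r1 \<circ> r1 = id" by (auto simp: r1_def fun_eq_iff)
lemma umum[simp]: "uminus \<circ> uminus = (id :: int \<Rightarrow> int)" by (auto simp: fun_eq_iff)
lemma tptm[simp]: "tp \<circ> tm = id" "tm \<circ> tp = id" by (auto simp: tp_def tm_def fun_eq_iff)

definition phi_id :: "'a \<Rightarrow> 'a \<Rightarrow> 'a \<Rightarrow> int \<Rightarrow> int \<Rightarrow> int" where
  "phi_id A B x k = (if x = A then (if k = 0 then r1 else id) else if x = B then uminus else id)"
definition mu2 :: "'a \<Rightarrow> 'a \<Rightarrow> 'a \<Rightarrow> int" where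
  "mu2 A B x = (if x = A \<or> x = B then 1 else 0)"

definition phi_sw :: "'a \<Rightarrow> 'a \<Rightarrow> 'a \<Rightarrow> int \<Rightarrow> int \<Rightarrow> int" where
  "phi_sw A B x k = (if x = A then (if k = 1 then tm else id) else if x = B then (if k = 1 then tp else id) else id)"

definition phi_ax :: "('a \<Rightarrow> 'a) \<Rightarrow> 'a \<Rightarrow> 'a \<Rightarrow> 'a \<Rightarrow> int \<Rightarrow> int \<Rightarrow> int" where
  "phi_ax \<tau> A B x k = (if x = A then (if k = 1 then tp else id) else if x = \<tau> A then (if k = 1 then tm else id)
      else if x = B then (if k = 1 then uminus else id) else id)"

definition phi_bo :: "('a \<Rightarrow> 'a) \<Rightarrow> 'a \<Rightarrow> 'a \<Rightarrow> 'a \<Rightarrow> int \<Rightarrow> int \<Rightarrow> int" where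
  "phi_bo \<tau> A B x k = (if x = A then (if k = 1 then tp else id) else if x = \<tau> A then (if k = 1 then tm else id)
      else if x = B \<or> x = \<tau> B then (if k = 1 then r1 else id) else id)"

definition phi_a5 :: "('a \<Rightarrow> 'a) \<Rightarrow> 'a \<Rightarrow> 'a \<Rightarrow> int \<Rightarrow> int \<Rightarrow> int" where
  "phi_a5 \<tau> A x k = (if x = A then (if k = 1 then tp else id) else if x = \<tau> A then (if k = 1 then tm else id) else id)"

definition phi_ab :: "('a \<Rightarrow> 'a) \<Rightarrow> 'a \<Rightarrow> 'a \<Rightarrow> 'a \<Rightarrow> int \<Rightarrow> int \<Rightarrow> int" where
  "phi_ab \<tau> A B x k = (if x = A then (if k = 0 \<or> k = 1 then uminus else id)
      else if x = B \<or> x = \<tau> B then (if k = 2 then id else r1) else id)"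
definition mu_ab :: "('a \<Rightarrow> 'a) \<Rightarrow> 'a \<Rightarrow> 'a \<Rightarrow> 'a \<Rightarrow> int" where
  "mu_ab \<tau> A B x = (if x = A then 2 else if x = B then 3 else if x = \<tau> B then 1 else 0)"

lemma tinj: "\<tau> \<circ> \<tau> = id \<Longrightarrow> (\<tau> x = \<tau> y) = (x = y)"
  by (metis tt)

lemma teq: "\<tau> \<circ> \<tau> = id \<Longrightarrow> (\<tau> x = y) = (x = \<tau> y)"
  by (metis tt)

lemma good_id:
  assumes inv: "\<tau> \<circ> \<tau> = id" and "A \<noteq> B" "\<tau> A = A" "\<tau> B = B"
  shows "good \<tau> (phi_id A B) (mu2 A B) 2"
proof -
  have a: "(\<tau> x = A) = (x = A)" "(\<tau> x = B) = (x = B)" for x using assms teq[OF inv] by metis+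
  show ?thesis using assms unfolding good_def phi_id_def mu2_def
    by (auto simp: a fun_eq_iff r1_def)
qed

lemma good_sw:
  assumes inv: "\<tau> \<circ> \<tau> = id" and "A \<noteq> B" "\<tau> A = B"
  shows "good \<tau> (phi_sw A B) (mu2 A B) 2"
proof -
  have a: "(\<tau> x = A) = (x = B)" "(\<tau> x = B) = (x = A)" for x using assms teq[OF inv] tt[OF inv] by metis+
  show ?thesis using assms unfolding good_def phi_sw_def mu2_def
    by (auto simp: a fun_eq_iff tp_def tm_def)
qed

lemma good_ax:
  assumes inv: "\<tau> \<circ> \<tau> = id" and "A \<noteq> B" "\<tau> A \<noteq> A" "\<tau> A \<noteq> B" "\<tau> B = B"
  shows "good \<tau> (phi_ax \<tau> A B) (mu2 A (\<tau> A)) 2"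
proof -
  have a: "(\<tau> x = A) = (x = \<tau> A)" "(\<tau> x = \<tau> A) = (x = A)" "(\<tau> x = B) = (x = B)" for x
    using assms teq[OF inv] tt[OF inv] by metis+
  show ?thesis using assms unfolding good_def phi_ax_def mu2_def
    by (auto simp: a fun_eq_iff tp_def tm_def)
qed

lemma good_bo:
  assumes inv: "\<tau> \<circ> \<tau> = id" and "A \<noteq> B" "\<tau> A \<noteq> A" "\<tau> A \<noteq> B" "\<tau> B \<noteq> B"
  shows "good \<tau> (phi_bo \<tau> A B) (mu2 A (\<tau> A)) 2"
proof -
  have a: "(\<tau> x = A) = (x = \<tau> A)" "(\<tau> x = \<tau> A) = (x = A)" "(\<tau> x = B) = (x = \<tau> B)" "(\<tau> x = \<tau> B) = (x = B)" for x
    using assms teq[OF inv] tt[OF inv] by metis+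
  have b: "\<tau> B \<noteq> A" "\<tau> B \<noteq> \<tau> A" using assms tt[OF inv] by metis+
  show ?thesis using assms b unfolding good_def phi_bo_def mu2_def
    by (auto simp: a fun_eq_iff tp_def tm_def r1_def)
qed

lemma good_a5:
  assumes inv: "\<tau> \<circ> \<tau> = id" and "\<tau> A \<noteq> A"
  shows "good \<tau> (phi_a5 \<tau> A) (mu2 A (\<tau> A)) 2"
proof -
  have a: "(\<tau> x = A) = (x = \<tau> A)" "(\<tau> x = \<tau> A) = (x = A)" for x
    using assms teq[OF inv] tt[OF inv] by metis+
  show ?thesis using assms unfolding good_def phi_a5_def mu2_def
    by (auto simp: a fun_eq_iff tp_def tm_def)
qed

lemma good_ab:
  assumes inv: "\<tau> \<circ> \<tau> = id" and "A \<noteq> B" "\<tau> A = A" "\<tau> B \<noteq> B"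
  shows "good \<tau> (phi_ab \<tau> A B) (mu_ab \<tau> A B) 4"
proof -
  have a: "(\<tau> x = A) = (x = A)" "(\<tau> x = B) = (x = \<tau> B)" "(\<tau> x = \<tau> B) = (x = B)" for x
    using assms teq[OF inv] tt[OF inv] by metis+
  have b: "\<tau> B \<noteq> A" using assms tt[OF inv] by metis
  show ?thesis using assms b unfolding good_def phi_ab_def mu_ab_def
    by (auto simp: a fun_eq_iff r1_def)
qed

lemma use_inv:
  assumes inv: "\<tau> \<circ> \<tau> = id" and g: "good \<tau> \<phi> \<mu> M"
    and d: "Finv \<phi> \<mu> M fst (desing w) 0 \<noteq> Finv \<phi> \<mu> M (\<tau> \<circ> fst) (rev (desing w)) 0"
    and m: "map \<tau> w \<noteq> rev w"
  shows "homot_skew_symmetric \<tau> w \<longleftrightarrow> contractible \<tau> w \<or> skew_symmetric \<tau> w"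
  using final_notHS[OF inv notHS_inv[OF inv g d] m] .

lemma tcases:
  assumes inv: "\<tau> \<circ> \<tau> = id" and ab: "A \<noteq> B"
  obtains (tid) "\<tau> A = A" "\<tau> B = B" | (tab) "\<tau> A = A" "\<tau> B \<noteq> B" "\<tau> B \<noteq> A"
   | (tsw) "\<tau> A = B" "\<tau> B = A"
   | (tax) "\<tau> A \<noteq> A" "\<tau> A \<noteq> B" "\<tau> B = B" "\<tau> B \<noteq> A"
   | (tbo) "\<tau> A \<noteq> A" "\<tau> A \<noteq> B" "\<tau> B \<noteq> B" "\<tau> B \<noteq> A" "\<tau> B \<noteq> \<tau> A"
proof -
  have t: "\<And>x. \<tau> (\<tau> x) = x" by (rule tt[OF inv])
  show thesis
  proof (cases "\<tau> A = A")
    case True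
    then have "\<tau> B \<noteq> A" using t ab by metis
    then show thesis using True that(1,2) by blast
  next
    case False
    show thesis
    proof (cases "\<tau> A = B")
      case True
      then have "\<tau> B = A" using t by metis
      then show thesis using True that(3) by blast
    next
      case F2: False
      have "\<tau> B \<noteq> A" using t F2 by metis
      moreover have "\<tau> B \<noteq> \<tau> A" using t ab by metis
      ultimately show thesis using False F2 that(4,5) by blast
    qed
  qed
qed

lemma nw_mid:
  assumes nw: "is_nanoword (pre @ s @ post)"
    and c2: "\<forall>x\<in>set s'. count_list s' x = 2"
    and d1: "set s' \<inter> set pre = {}" "set s' \<inter> set post = {}"
    and d2: "set s \<inter> set pre = {}" "set s \<inter> set post = {}"
  shows "is_nanoword (pre @ s' @ post)"
  unfolding is_nanoword_def
proof
  fix x assume x: "x \<in> set (pre @ s' @ post)"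
  show "count_list (pre @ s' @ post) x = 2"
  proof (cases "x \<in> set s'")
    case True
    then have "x \<notin> set pre" "x \<notin> set post" using d1 by auto
    then show ?thesis using True c2 by simp
  next
    case False
    then have xp: "x \<in> set pre \<or> x \<in> set post" using x by auto
    then have "x \<notin> set s" using d2 by auto
    moreover have "count_list (pre @ s @ post) x = 2" using nw xp unfolding is_nanoword_def by auto
    ultimately show ?thesis using False by simp
  qed
qed

lemma contr_abc:
  assumes P: "\<tau> P = P"
    and pa: "p a = P" "p b = P" "p c = P" "p f = P" "p g = P" "p h = P" "p i = P"
    and dist: "distinct [a,b,c,f,g,h,i]"
    and dpre: "set [a,b,c,f,g,h,i] \<inter> set pre = {}" and dpost: "set [a,b,c,f,g,h,i] \<inter> set post = {}"
    and nw: "is_nanoword (pre @ [a,b,a,c,b,c] @ post)"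
  shows "nano_homotopic \<tau> (p, pre @ [a,b,a,c,b,c] @ post) (p, pre @ post)"
proof -
  have d0: "set [a,b,a,c,b,c] \<inter> set pre = {}" "set [a,b,a,c,b,c] \<inter> set post = {}" using dpre dpost by auto
  have N: "is_nanoword (pre @ s' @ post)" if "\<forall>x\<in>set s'. count_list s' x = 2" "set s' \<subseteq> set [a,b,c,f,g,h,i]" for s'
    by (rule nw_mid[OF nw that(1)]) (use that(2) dpre dpost d0 in auto)
  have n1: "is_nanoword (pre @ [b,a,c,a,c,b] @ post)" by (rule N) (use dist in auto)
  have n2: "is_nanoword (pre @ [b,f,g,a,c,g,f,a,c,b] @ post)" by (rule N) (use dist in auto)
  have n3: "is_nanoword (pre @ [b,f,h,i,g,a,c,g,f,a,c,i,h,b] @ post)" by (rule N) (use dist in auto)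
  have n4: "is_nanoword (pre @ [b,f,h,g,i,a,g,c,f,a,i,c,h,b] @ post)" by (rule N) (use dist in auto)
  have n5: "is_nanoword (pre @ [b,f,h,g,g,c,f,c,h,b] @ post)" by (rule N) (use dist in auto)
  have n6: "is_nanoword (pre @ [b,f,h,c,f,c,h,b] @ post)" by (rule N) (use dist in auto)
  have n7: "is_nanoword (pre @ [b,f,f,b] @ post)" by (rule N) (use dist in auto)
  have "nano_step \<tau> (p, pre @ [a, b] @ [] @ [a, c] @ [] @ [b, c] @ post) (p, pre @ [b, a] @ [] @ [c, a] @ [] @ [c, b] @ post)"
    by (rule nano_step.move3) (use nw dist pa in simp_all)
  then have s1: "nano_homotopic \<tau> (p, pre @ [a,b,a,c,b,c] @ post) (p, pre @ [b,a,c,a,c,b] @ post)"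
    by (simp add: nh_fwd)
  have "nano_step \<tau> (p, (pre @ [b]) @ [f, g] @ [a,c] @ [g, f] @ ([a,c,b] @ post)) (p, (pre @ [b]) @ [a,c] @ ([a,c,b] @ post))"
    by (rule nano_step.move2) (use n2 pa P in simp_all)
  then have s2: "nano_homotopic \<tau> (p, pre @ [b,a,c,a,c,b] @ post) (p, pre @ [b,f,g,a,c,g,f,a,c,b] @ post)"
    by (simp add: nh_bwd)
  have "nano_step \<tau> (p, (pre @ [b,f]) @ [h, i] @ [g,a,c,g,f,a,c] @ [i, h] @ ([b] @ post)) (p, (pre @ [b,f]) @ [g,a,c,g,f,a,c] @ ([b] @ post))"
    by (rule nano_step.move2) (use n3 pa P in simp_all)
  then have s3: "nano_homotopic \<tau> (p, pre @ [b,f,g,a,c,g,f,a,c,b] @ post) (p, pre @ [b,f,h,i,g,a,c,g,f,a,c,i,h,b] @ post)"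
    by (simp add: nh_bwd)
  have "nano_step \<tau> (p, (pre @ [b,f,h]) @ [g, i] @ [a] @ [g, c] @ [f,a] @ [i, c] @ ([h,b] @ post))
                      (p, (pre @ [b,f,h]) @ [i, g] @ [a] @ [c, g] @ [f,a] @ [c, i] @ ([h,b] @ post))"
    by (rule nano_step.move3) (use n4 dist pa in \<open>simp_all add: eq_commute[of g c] eq_commute[of i c]\<close>)
  then have s4: "nano_homotopic \<tau> (p, pre @ [b,f,h,i,g,a,c,g,f,a,c,i,h,b] @ post) (p, pre @ [b,f,h,g,i,a,g,c,f,a,i,c,h,b] @ post)"
    by (simp add: nh_bwd)
  have "nano_step \<tau> (p, (pre @ [b,f,h,g]) @ [i, a] @ [g,c,f] @ [a, i] @ ([c,h,b] @ post)) (p, (pre @ [b,f,h,g]) @ [g,c,f] @ ([c,h,b] @ post))"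
    by (rule nano_step.move2) (use n4 pa P in simp_all)
  then have s5: "nano_homotopic \<tau> (p, pre @ [b,f,h,g,i,a,g,c,f,a,i,c,h,b] @ post) (p, pre @ [b,f,h,g,g,c,f,c,h,b] @ post)"
    by (simp add: nh_fwd)
  have "nano_step \<tau> (p, (pre @ [b,f,h]) @ [g, g] @ ([c,f,c,h,b] @ post)) (p, (pre @ [b,f,h]) @ ([c,f,c,h,b] @ post))"
    by (rule nano_step.move1) (use n5 in simp_all)
  then have s6: "nano_homotopic \<tau> (p, pre @ [b,f,h,g,g,c,f,c,h,b] @ post) (p, pre @ [b,f,h,c,f,c,h,b] @ post)"
    by (simp add: nh_fwd)
  have "nano_step \<tau> (p, (pre @ [b,f]) @ [h, c] @ [f] @ [c, h] @ ([b] @ post)) (p, (pre @ [b,f]) @ [f] @ ([b] @ post))"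
    by (rule nano_step.move2) (use n6 pa P in simp_all)
  then have s7: "nano_homotopic \<tau> (p, pre @ [b,f,h,c,f,c,h,b] @ post) (p, pre @ [b,f,f,b] @ post)"
    by (simp add: nh_fwd)
  have "nano_step \<tau> (p, pre @ [b, f] @ [] @ [f, b] @ post) (p, pre @ [] @ post)"
    by (rule nano_step.move2) (use n7 pa P in simp_all)
  then have s8: "nano_homotopic \<tau> (p, pre @ [b,f,f,b] @ post) (p, pre @ post)"
    by (simp add: nh_fwd)
  show ?thesis by (rule nh_trans[OF s1 nh_trans[OF s2 nh_trans[OF s3 nh_trans[OF s4 nh_trans[OF s5 nh_trans[OF s6 nh_trans[OF s7 s8]]]]]]])
qed

lemma C_adj_gen:
  assumes ab: "A \<noteq> B" and tA: "\<tau> A = A"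
    and d: "desing w = xx @ [(B,1,2), (B,1,2)] @ yy"
    and e: "xx @ yy = [(A,1,2),(A,1,3),(A,1,2),(A,2,3),(A,1,3),(A,2,3)]"
  shows "contractible \<tau> w"
proof -
  have nw: "is_nanoword (xx @ [(B,1,2), (B,1,2)] @ yy)"
  proof -
    have s: "set (xx @ [(B,1,2), (B,1,2)] @ yy) = insert (B,1,2) (set (xx @ yy))" by auto
    have c: "count_list (xx @ [(B,1,2), (B,1,2)] @ yy) z = count_list (xx @ yy) z + (if z = (B,1,2) then 2 else 0)" for z
      by simp
    show ?thesis unfolding is_nanoword_def s using c e ab by auto
  qed
  have s1: "nano_homotopic \<tau> (fst, xx @ [(B,1,2), (B,1,2)] @ yy) (fst, xx @ yy)"
    by (rule nh_fwd, rule nano_step.move1, rule nw)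
  have s2: "nano_homotopic \<tau> (fst, [] @ [(A,1::nat,2::nat),(A,1,3),(A,1,2),(A,2,3),(A,1,3),(A,2,3)] @ []) (fst, [] @ [])"
    by (rule contr_abc[where P=A and f="(A,0,1)" and g="(A,0,2)" and h="(A,0,3)" and i="(A,0,4)"])
       (use tA in \<open>simp_all add: is_nanoword_def\<close>)
  show ?thesis unfolding contractible_def d using nh_trans[OF s1] s2 e by simp
qed

lemma C_AAABB: "A \<noteq> B \<Longrightarrow> \<tau> A = A \<Longrightarrow> contractible \<tau> [A,A,A,B,B]"
  by (rule C_adj_gen[where xx="[(A,1,2),(A,1,3),(A,1,2),(A,2,3),(A,1,3),(A,2,3)]" and yy="[]" and B=B]) (simp_all add: d_AAABB)
lemma C_AABBA: "A \<noteq> B \<Longrightarrow> \<tau> A = A \<Longrightarrow> contractible \<tau> [A,A,B,B,A]"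
  by (rule C_adj_gen[where xx="[(A,1,2),(A,1,3),(A,1,2),(A,2,3)]" and yy="[(A,1,3),(A,2,3)]" and B=B]) (simp_all add: d_AABBA)
lemma C_ABBAA: "A \<noteq> B \<Longrightarrow> \<tau> A = A \<Longrightarrow> contractible \<tau> [A,B,B,A,A]"
  by (rule C_adj_gen[where xx="[(A,1,2),(A,1,3)]" and yy="[(A,1,2),(A,2,3),(A,1,3),(A,2,3)]" and B=B]) (simp_all add: d_ABBAA)
lemma C_BBAAA: "A \<noteq> B \<Longrightarrow> \<tau> A = A \<Longrightarrow> contractible \<tau> [B,B,A,A,A]"
  by (rule C_adj_gen[where xx="[]" and yy="[(A,1,2),(A,1,3),(A,1,2),(A,2,3),(A,1,3),(A,2,3)]" and B=B]) (simp_all add: d_BBAAA)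

lemma C_BAAAB:
  assumes ab: "A \<noteq> B" and tA: "\<tau> A = A"
  shows "contractible \<tau> [B,A,A,A,B]"
proof -
  have s1: "nano_homotopic \<tau> (fst, [(B,1::nat,2::nat)] @ [(A,1,2),(A,1,3),(A,1,2),(A,2,3),(A,1,3),(A,2,3)] @ [(B,1,2)]) (fst, [(B,1,2)] @ [(B,1,2)])"
    by (rule contr_abc[where P=A and f="(A,0,1)" and g="(A,0,2)" and h="(A,0,3)" and i="(A,0,4)"])
       (use tA ab in \<open>simp_all add: is_nanoword_def\<close>)
  have s2: "nano_homotopic \<tau> (fst, [] @ [(B,1::nat,2::nat), (B,1,2)] @ []) (fst, [] @ [])"
    by (rule nh_fwd, rule nano_step.move1) (simp add: is_nanoword_def)
  show ?thesis unfolding contractible_def d_BAAAB[OF ab] using nh_trans[OF s1] s2 by simp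
qed

lemma C_ABABA:
  assumes ab: "A \<noteq> B" and tA: "\<tau> A = B"
  shows "contractible \<tau> [A,B,A,B,A]"
proof -
  have s1: "nano_homotopic \<tau> (fst, [(A,1::nat,2::nat)] @ [(A,1,3),(B,1,2)] @ [(A,1,2),(A,2,3)] @ [(B,1,2),(A,1,3)] @ [(A,2,3)])
      (fst, [(A,1,2)] @ [(A,1,2),(A,2,3)] @ [(A,2,3)])"
    by (rule nh_fwd, rule nano_step.move2) (use ab tA in \<open>simp_all add: is_nanoword_def\<close>)
  then have t1: "nano_homotopic \<tau> (fst, desing [A,B,A,B,A]) (fst, [(A,1,2),(A,1,2),(A,2,3),(A,2,3)])"
    by (simp add: d_ABABA[OF ab])
  have s2: "nano_homotopic \<tau> (fst, [] @ [(A,1::nat,2::nat),(A,1,2)] @ [(A,2,3),(A,2,3)]) (fst, [] @ [(A,2,3),(A,2,3)])"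
    by (rule nh_fwd, rule nano_step.move1) (simp add: is_nanoword_def)
  then have t2: "nano_homotopic \<tau> (fst, [(A,1::nat,2::nat),(A,1,2),(A,2,3),(A,2,3)]) (fst, [(A,2,3),(A,2,3)])"
    by simp
  have s3: "nano_homotopic \<tau> (fst, [] @ [(A,2::nat,3::nat),(A,2,3)] @ []) (fst, [] @ [])"
    by (rule nh_fwd, rule nano_step.move1) (simp add: is_nanoword_def)
  then have t3: "nano_homotopic \<tau> (fst, [(A,2::nat,3::nat),(A,2,3)]) (fst, [])"
    by simp
  show ?thesis unfolding contractible_def using nh_trans[OF t1 nh_trans[OF t2 t3]] .
qed

lemma S_ABABA:
  assumes inv: "\<tau> \<circ> \<tau> = id" and ab: "A \<noteq> B" and t: "\<tau> A = A" "\<tau> B = B"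
  shows "homot_skew_symmetric \<tau> [A,B,A,B,A]"
  by (rule HS_iso[where f="\<lambda>(x,i,j). (\<tau> x, (if x = A then 4 else 3) - j, (if x = A then 4 else 3) - i)"])
     (use ab t in \<open>simp_all add: d_ABABA is_nanoword_def\<close>)

lemma S_BAAAB:
  assumes inv: "\<tau> \<circ> \<tau> = id" and ab: "A \<noteq> B" and t: "\<tau> A = A" "\<tau> B = B"
  shows "homot_skew_symmetric \<tau> [B,A,A,A,B]"
  by (rule HS_iso[where f="\<lambda>(x,i,j). (\<tau> x, (if x = A then 4 else 3) - j, (if x = A then 4 else 3) - i)"])
     (use ab t in \<open>simp_all add: d_BAAAB is_nanoword_def\<close>)

lemma S_AAAAA:
  assumes inv: "\<tau> \<circ> \<tau> = id" and t: "\<tau> A = A"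
  shows "homot_skew_symmetric \<tau> [A,A,A,A,A]"
  by (rule HS_iso[where f="\<lambda>(x,i,j). (\<tau> x, 6 - j, 6 - i)"])
     (use t in \<open>simp_all add: d_AAAAA is_nanoword_def\<close>)

lemma p_AAAAA:
  assumes inv: "\<tau> \<circ> \<tau> = id"
  shows "homot_skew_symmetric \<tau> [A,A,A,A,A] \<longleftrightarrow> contractible \<tau> [A,A,A,A,A] \<or> skew_symmetric \<tau> [A,A,A,A,A]"
proof (cases "\<tau> A = A")
  case True
  show ?thesis by (rule final_S[OF inv S_AAAAA[OF inv True]]) (use True in simp)
next
  case False
  have mm: "map \<tau> [A,A,A,A,A] \<noteq> rev [A,A,A,A,A]" using False by simp
  show ?thesis
    by (rule use_inv[OF inv good_a5[OF inv False] _ mm])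
       (use False in \<open>simp add: d_AAAAA Finv_def key_def mu2_def phi_a5_def tp_def tm_def\<close>)
qed

lemma p_AABAB:
  assumes inv: "\<tau> \<circ> \<tau> = id" and ab: "A \<noteq> B"
  shows "homot_skew_symmetric \<tau> [A,A,B,A,B] \<longleftrightarrow> contractible \<tau> [A,A,B,A,B] \<or> skew_symmetric \<tau> [A,A,B,A,B]"
proof -
  consider (tid) "\<tau> A = A" "\<tau> B = B" | (tab) "\<tau> A = A" "\<tau> B \<noteq> B" "\<tau> B \<noteq> A"
   | (tsw) "\<tau> A = B" "\<tau> B = A"
   | (tax) "\<tau> A \<noteq> A" "\<tau> A \<noteq> B" "\<tau> B = B" "\<tau> B \<noteq> A"
   | (tbo) "\<tau> A \<noteq> A" "\<tau> A \<noteq> B" "\<tau> B \<noteq> B" "\<tau> B \<noteq> A" "\<tau> B \<noteq> \<tau> A"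
    by (rule tcases[OF inv ab])
  then show ?thesis
  proof cases
    case tid
    have mm: "map \<tau> [A,A,B,A,B] \<noteq> rev [A,A,B,A,B]" using ab tid by auto
    show ?thesis
      by (rule use_inv[OF inv good_id[OF inv ab tid] _ mm]) (use ab tid in \<open>simp add: d_AABAB Finv_def key_def mu2_def mu_ab_def phi_id_def phi_sw_def phi_ax_def phi_bo_def phi_ab_def r1_def tp_def tm_def\<close>)
  next
    case tab
    have mm: "map \<tau> [A,A,B,A,B] \<noteq> rev [A,A,B,A,B]" using ab tab by auto
    show ?thesis
      by (rule use_inv[OF inv good_ab[OF inv ab tab(1-2)] _ mm]) (use ab tab in \<open>simp add: d_AABAB Finv_def key_def mu2_def mu_ab_def phi_id_def phi_sw_def phi_ax_def phi_bo_def phi_ab_def r1_def tp_def tm_def\<close>)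
  next
    case tsw
    have mm: "map \<tau> [A,A,B,A,B] \<noteq> rev [A,A,B,A,B]" using ab tsw by auto
    show ?thesis
      by (rule use_inv[OF inv good_sw[OF inv ab tsw(1)] _ mm]) (use ab tsw in \<open>simp add: d_AABAB Finv_def key_def mu2_def mu_ab_def phi_id_def phi_sw_def phi_ax_def phi_bo_def phi_ab_def r1_def tp_def tm_def\<close>)
  next
    case tax
    have mm: "map \<tau> [A,A,B,A,B] \<noteq> rev [A,A,B,A,B]" using ab tax by auto
    show ?thesis
      by (rule use_inv[OF inv good_ax[OF inv ab tax(1-3)] _ mm]) (use ab tax in \<open>simp add: d_AABAB Finv_def key_def mu2_def mu_ab_def phi_id_def phi_sw_def phi_ax_def phi_bo_def phi_ab_def r1_def tp_def tm_def\<close>)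
  next
    case tbo
    have mm: "map \<tau> [A,A,B,A,B] \<noteq> rev [A,A,B,A,B]" using ab tbo by auto
    show ?thesis
      by (rule use_inv[OF inv good_bo[OF inv ab tbo(1-3)] _ mm]) (use ab tbo in \<open>simp add: d_AABAB Finv_def key_def mu2_def mu_ab_def phi_id_def phi_sw_def phi_ax_def phi_bo_def phi_ab_def r1_def tp_def tm_def\<close>)
  qed
qed

lemma p_ABAAB:
  assumes inv: "\<tau> \<circ> \<tau> = id" and ab: "A \<noteq> B"
  shows "homot_skew_symmetric \<tau> [A,B,A,A,B] \<longleftrightarrow> contractible \<tau> [A,B,A,A,B] \<or> skew_symmetric \<tau> [A,B,A,A,B]"
proof -
  consider (tid) "\<tau> A = A" "\<tau> B = B" | (tab) "\<tau> A = A" "\<tau> B \<noteq> B" "\<tau> B \<noteq> A"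
   | (tsw) "\<tau> A = B" "\<tau> B = A"
   | (tax) "\<tau> A \<noteq> A" "\<tau> A \<noteq> B" "\<tau> B = B" "\<tau> B \<noteq> A"
   | (tbo) "\<tau> A \<noteq> A" "\<tau> A \<noteq> B" "\<tau> B \<noteq> B" "\<tau> B \<noteq> A" "\<tau> B \<noteq> \<tau> A"
    by (rule tcases[OF inv ab])
  then show ?thesis
  proof cases
    case tid
    have mm: "map \<tau> [A,B,A,A,B] \<noteq> rev [A,B,A,A,B]" using ab tid by auto
    show ?thesis
      by (rule use_inv[OF inv good_id[OF inv ab tid] _ mm]) (use ab tid in \<open>simp add: d_ABAAB Finv_def key_def mu2_def mu_ab_def phi_id_def phi_sw_def phi_ax_def phi_bo_def phi_ab_def r1_def tp_def tm_def\<close>)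
  next
    case tab
    have mm: "map \<tau> [A,B,A,A,B] \<noteq> rev [A,B,A,A,B]" using ab tab by auto
    show ?thesis
      by (rule use_inv[OF inv good_ab[OF inv ab tab(1-2)] _ mm]) (use ab tab in \<open>simp add: d_ABAAB Finv_def key_def mu2_def mu_ab_def phi_id_def phi_sw_def phi_ax_def phi_bo_def phi_ab_def r1_def tp_def tm_def\<close>)
  next
    case tsw
    have mm: "map \<tau> [A,B,A,A,B] \<noteq> rev [A,B,A,A,B]" using ab tsw by auto
    show ?thesis
      by (rule use_inv[OF inv good_sw[OF inv ab tsw(1)] _ mm]) (use ab tsw in \<open>simp add: d_ABAAB Finv_def key_def mu2_def mu_ab_def phi_id_def phi_sw_def phi_ax_def phi_bo_def phi_ab_def r1_def tp_def tm_def\<close>)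
  next
    case tax
    have mm: "map \<tau> [A,B,A,A,B] \<noteq> rev [A,B,A,A,B]" using ab tax by auto
    show ?thesis
      by (rule use_inv[OF inv good_ax[OF inv ab tax(1-3)] _ mm]) (use ab tax in \<open>simp add: d_ABAAB Finv_def key_def mu2_def mu_ab_def phi_id_def phi_sw_def phi_ax_def phi_bo_def phi_ab_def r1_def tp_def tm_def\<close>)
  next
    case tbo
    have mm: "map \<tau> [A,B,A,A,B] \<noteq> rev [A,B,A,A,B]" using ab tbo by auto
    show ?thesis
      by (rule use_inv[OF inv good_bo[OF inv ab tbo(1-3)] _ mm]) (use ab tbo in \<open>simp add: d_ABAAB Finv_def key_def mu2_def mu_ab_def phi_id_def phi_sw_def phi_ax_def phi_bo_def phi_ab_def r1_def tp_def tm_def\<close>)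
  qed
qed

lemma p_BAABA:
  assumes inv: "\<tau> \<circ> \<tau> = id" and ab: "A \<noteq> B"
  shows "homot_skew_symmetric \<tau> [B,A,A,B,A] \<longleftrightarrow> contractible \<tau> [B,A,A,B,A] \<or> skew_symmetric \<tau> [B,A,A,B,A]"
proof -
  consider (tid) "\<tau> A = A" "\<tau> B = B" | (tab) "\<tau> A = A" "\<tau> B \<noteq> B" "\<tau> B \<noteq> A"
   | (tsw) "\<tau> A = B" "\<tau> B = A"
   | (tax) "\<tau> A \<noteq> A" "\<tau> A \<noteq> B" "\<tau> B = B" "\<tau> B \<noteq> A"
   | (tbo) "\<tau> A \<noteq> A" "\<tau> A \<noteq> B" "\<tau> B \<noteq> B" "\<tau> B \<noteq> A" "\<tau> B \<noteq> \<tau> A"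
    by (rule tcases[OF inv ab])
  then show ?thesis
  proof cases
    case tid
    have mm: "map \<tau> [B,A,A,B,A] \<noteq> rev [B,A,A,B,A]" using ab tid by auto
    show ?thesis
      by (rule use_inv[OF inv good_id[OF inv ab tid] _ mm]) (use ab tid in \<open>simp add: d_BAABA Finv_def key_def mu2_def mu_ab_def phi_id_def phi_sw_def phi_ax_def phi_bo_def phi_ab_def r1_def tp_def tm_def\<close>)
  next
    case tab
    have mm: "map \<tau> [B,A,A,B,A] \<noteq> rev [B,A,A,B,A]" using ab tab by auto
    show ?thesis
      by (rule use_inv[OF inv good_ab[OF inv ab tab(1-2)] _ mm]) (use ab tab in \<open>simp add: d_BAABA Finv_def key_def mu2_def mu_ab_def phi_id_def phi_sw_def phi_ax_def phi_bo_def phi_ab_def r1_def tp_def tm_def\<close>)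
  next
    case tsw
    have mm: "map \<tau> [B,A,A,B,A] \<noteq> rev [B,A,A,B,A]" using ab tsw by auto
    show ?thesis
      by (rule use_inv[OF inv good_sw[OF inv ab tsw(1)] _ mm]) (use ab tsw in \<open>simp add: d_BAABA Finv_def key_def mu2_def mu_ab_def phi_id_def phi_sw_def phi_ax_def phi_bo_def phi_ab_def r1_def tp_def tm_def\<close>)
  next
    case tax
    have mm: "map \<tau> [B,A,A,B,A] \<noteq> rev [B,A,A,B,A]" using ab tax by auto
    show ?thesis
      by (rule use_inv[OF inv good_ax[OF inv ab tax(1-3)] _ mm]) (use ab tax in \<open>simp add: d_BAABA Finv_def key_def mu2_def mu_ab_def phi_id_def phi_sw_def phi_ax_def phi_bo_def phi_ab_def r1_def tp_def tm_def\<close>)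
  next
    case tbo
    have mm: "map \<tau> [B,A,A,B,A] \<noteq> rev [B,A,A,B,A]" using ab tbo by auto
    show ?thesis
      by (rule use_inv[OF inv good_bo[OF inv ab tbo(1-3)] _ mm]) (use ab tbo in \<open>simp add: d_BAABA Finv_def key_def mu2_def mu_ab_def phi_id_def phi_sw_def phi_ax_def phi_bo_def phi_ab_def r1_def tp_def tm_def\<close>)
  qed
qed

lemma p_BABAA:
  assumes inv: "\<tau> \<circ> \<tau> = id" and ab: "A \<noteq> B"
  shows "homot_skew_symmetric \<tau> [B,A,B,A,A] \<longleftrightarrow> contractible \<tau> [B,A,B,A,A] \<or> skew_symmetric \<tau> [B,A,B,A,A]"
proof -
  consider (tid) "\<tau> A = A" "\<tau> B = B" | (tab) "\<tau> A = A" "\<tau> B \<noteq> B" "\<tau> B \<noteq> A"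
   | (tsw) "\<tau> A = B" "\<tau> B = A"
   | (tax) "\<tau> A \<noteq> A" "\<tau> A \<noteq> B" "\<tau> B = B" "\<tau> B \<noteq> A"
   | (tbo) "\<tau> A \<noteq> A" "\<tau> A \<noteq> B" "\<tau> B \<noteq> B" "\<tau> B \<noteq> A" "\<tau> B \<noteq> \<tau> A"
    by (rule tcases[OF inv ab])
  then show ?thesis
  proof cases
    case tid
    have mm: "map \<tau> [B,A,B,A,A] \<noteq> rev [B,A,B,A,A]" using ab tid by auto
    show ?thesis
      by (rule use_inv[OF inv good_id[OF inv ab tid] _ mm]) (use ab tid in \<open>simp add: d_BABAA Finv_def key_def mu2_def mu_ab_def phi_id_def phi_sw_def phi_ax_def phi_bo_def phi_ab_def r1_def tp_def tm_def\<close>)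
  next
    case tab
    have mm: "map \<tau> [B,A,B,A,A] \<noteq> rev [B,A,B,A,A]" using ab tab by auto
    show ?thesis
      by (rule use_inv[OF inv good_ab[OF inv ab tab(1-2)] _ mm]) (use ab tab in \<open>simp add: d_BABAA Finv_def key_def mu2_def mu_ab_def phi_id_def phi_sw_def phi_ax_def phi_bo_def phi_ab_def r1_def tp_def tm_def\<close>)
  next
    case tsw
    have mm: "map \<tau> [B,A,B,A,A] \<noteq> rev [B,A,B,A,A]" using ab tsw by auto
    show ?thesis
      by (rule use_inv[OF inv good_sw[OF inv ab tsw(1)] _ mm]) (use ab tsw in \<open>simp add: d_BABAA Finv_def key_def mu2_def mu_ab_def phi_id_def phi_sw_def phi_ax_def phi_bo_def phi_ab_def r1_def tp_def tm_def\<close>)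
  next
    case tax
    have mm: "map \<tau> [B,A,B,A,A] \<noteq> rev [B,A,B,A,A]" using ab tax by auto
    show ?thesis
      by (rule use_inv[OF inv good_ax[OF inv ab tax(1-3)] _ mm]) (use ab tax in \<open>simp add: d_BABAA Finv_def key_def mu2_def mu_ab_def phi_id_def phi_sw_def phi_ax_def phi_bo_def phi_ab_def r1_def tp_def tm_def\<close>)
  next
    case tbo
    have mm: "map \<tau> [B,A,B,A,A] \<noteq> rev [B,A,B,A,A]" using ab tbo by auto
    show ?thesis
      by (rule use_inv[OF inv good_bo[OF inv ab tbo(1-3)] _ mm]) (use ab tbo in \<open>simp add: d_BABAA Finv_def key_def mu2_def mu_ab_def phi_id_def phi_sw_def phi_ax_def phi_bo_def phi_ab_def r1_def tp_def tm_def\<close>)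
  qed
qed

lemma p_AAABB:
  assumes inv: "\<tau> \<circ> \<tau> = id" and ab: "A \<noteq> B"
  shows "homot_skew_symmetric \<tau> [A,A,A,B,B] \<longleftrightarrow> contractible \<tau> [A,A,A,B,B] \<or> skew_symmetric \<tau> [A,A,A,B,B]"
proof -
  consider (tid) "\<tau> A = A" "\<tau> B = B" | (tab) "\<tau> A = A" "\<tau> B \<noteq> B" "\<tau> B \<noteq> A"
   | (tsw) "\<tau> A = B" "\<tau> B = A"
   | (tax) "\<tau> A \<noteq> A" "\<tau> A \<noteq> B" "\<tau> B = B" "\<tau> B \<noteq> A"
   | (tbo) "\<tau> A \<noteq> A" "\<tau> A \<noteq> B" "\<tau> B \<noteq> B" "\<tau> B \<noteq> A" "\<tau> B \<noteq> \<tau> A"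
    by (rule tcases[OF inv ab])
  then show ?thesis
  proof cases
    case tid
    show ?thesis by (rule final_C[OF inv], rule C_AAABB) (use ab tid in simp_all)
  next
    case tab
    show ?thesis by (rule final_C[OF inv], rule C_AAABB) (use ab tab in simp_all)
  next
    case tsw
    have mm: "map \<tau> [A,A,A,B,B] \<noteq> rev [A,A,A,B,B]" using ab tsw by auto
    show ?thesis
      by (rule use_inv[OF inv good_sw[OF inv ab tsw(1)] _ mm]) (use ab tsw in \<open>simp add: d_AAABB Finv_def key_def mu2_def mu_ab_def phi_id_def phi_sw_def phi_ax_def phi_bo_def phi_ab_def r1_def tp_def tm_def\<close>)
  next
    case tax
    have mm: "map \<tau> [A,A,A,B,B] \<noteq> rev [A,A,A,B,B]" using ab tax by auto
    show ?thesis
      by (rule use_inv[OF inv good_ax[OF inv ab tax(1-3)] _ mm]) (use ab tax in \<open>simp add: d_AAABB Finv_def key_def mu2_def mu_ab_def phi_id_def phi_sw_def phi_ax_def phi_bo_def phi_ab_def r1_def tp_def tm_def\<close>)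
  next
    case tbo
    have mm: "map \<tau> [A,A,A,B,B] \<noteq> rev [A,A,A,B,B]" using ab tbo by auto
    show ?thesis
      by (rule use_inv[OF inv good_bo[OF inv ab tbo(1-3)] _ mm]) (use ab tbo in \<open>simp add: d_AAABB Finv_def key_def mu2_def mu_ab_def phi_id_def phi_sw_def phi_ax_def phi_bo_def phi_ab_def r1_def tp_def tm_def\<close>)
  qed
qed

lemma p_AABBA:
  assumes inv: "\<tau> \<circ> \<tau> = id" and ab: "A \<noteq> B"
  shows "homot_skew_symmetric \<tau> [A,A,B,B,A] \<longleftrightarrow> contractible \<tau> [A,A,B,B,A] \<or> skew_symmetric \<tau> [A,A,B,B,A]"
proof -
  consider (tid) "\<tau> A = A" "\<tau> B = B" | (tab) "\<tau> A = A" "\<tau> B \<noteq> B" "\<tau> B \<noteq> A"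
   | (tsw) "\<tau> A = B" "\<tau> B = A"
   | (tax) "\<tau> A \<noteq> A" "\<tau> A \<noteq> B" "\<tau> B = B" "\<tau> B \<noteq> A"
   | (tbo) "\<tau> A \<noteq> A" "\<tau> A \<noteq> B" "\<tau> B \<noteq> B" "\<tau> B \<noteq> A" "\<tau> B \<noteq> \<tau> A"
    by (rule tcases[OF inv ab])
  then show ?thesis
  proof cases
    case tid
    show ?thesis by (rule final_C[OF inv], rule C_AABBA) (use ab tid in simp_all)
  next
    case tab
    show ?thesis by (rule final_C[OF inv], rule C_AABBA) (use ab tab in simp_all)
  next
    case tsw
    have mm: "map \<tau> [A,A,B,B,A] \<noteq> rev [A,A,B,B,A]" using ab tsw by auto
    show ?thesis
      by (rule use_inv[OF inv good_sw[OF inv ab tsw(1)] _ mm]) (use ab tsw in \<open>simp add: d_AABBA Finv_def key_def mu2_def mu_ab_def phi_id_def phi_sw_def phi_ax_def phi_bo_def phi_ab_def r1_def tp_def tm_def\<close>)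
  next
    case tax
    have mm: "map \<tau> [A,A,B,B,A] \<noteq> rev [A,A,B,B,A]" using ab tax by auto
    show ?thesis
      by (rule use_inv[OF inv good_ax[OF inv ab tax(1-3)] _ mm]) (use ab tax in \<open>simp add: d_AABBA Finv_def key_def mu2_def mu_ab_def phi_id_def phi_sw_def phi_ax_def phi_bo_def phi_ab_def r1_def tp_def tm_def\<close>)
  next
    case tbo
    have mm: "map \<tau> [A,A,B,B,A] \<noteq> rev [A,A,B,B,A]" using ab tbo by auto
    show ?thesis
      by (rule use_inv[OF inv good_bo[OF inv ab tbo(1-3)] _ mm]) (use ab tbo in \<open>simp add: d_AABBA Finv_def key_def mu2_def mu_ab_def phi_id_def phi_sw_def phi_ax_def phi_bo_def phi_ab_def r1_def tp_def tm_def\<close>)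
  qed
qed

lemma p_ABBAA:
  assumes inv: "\<tau> \<circ> \<tau> = id" and ab: "A \<noteq> B"
  shows "homot_skew_symmetric \<tau> [A,B,B,A,A] \<longleftrightarrow> contractible \<tau> [A,B,B,A,A] \<or> skew_symmetric \<tau> [A,B,B,A,A]"
proof -
  consider (tid) "\<tau> A = A" "\<tau> B = B" | (tab) "\<tau> A = A" "\<tau> B \<noteq> B" "\<tau> B \<noteq> A"
   | (tsw) "\<tau> A = B" "\<tau> B = A"
   | (tax) "\<tau> A \<noteq> A" "\<tau> A \<noteq> B" "\<tau> B = B" "\<tau> B \<noteq> A"
   | (tbo) "\<tau> A \<noteq> A" "\<tau> A \<noteq> B" "\<tau> B \<noteq> B" "\<tau> B \<noteq> A" "\<tau> B \<noteq> \<tau> A"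
    by (rule tcases[OF inv ab])
  then show ?thesis
  proof cases
    case tid
    show ?thesis by (rule final_C[OF inv], rule C_ABBAA) (use ab tid in simp_all)
  next
    case tab
    show ?thesis by (rule final_C[OF inv], rule C_ABBAA) (use ab tab in simp_all)
  next
    case tsw
    have mm: "map \<tau> [A,B,B,A,A] \<noteq> rev [A,B,B,A,A]" using ab tsw by auto
    show ?thesis
      by (rule use_inv[OF inv good_sw[OF inv ab tsw(1)] _ mm]) (use ab tsw in \<open>simp add: d_ABBAA Finv_def key_def mu2_def mu_ab_def phi_id_def phi_sw_def phi_ax_def phi_bo_def phi_ab_def r1_def tp_def tm_def\<close>)
  next
    case tax
    have mm: "map \<tau> [A,B,B,A,A] \<noteq> rev [A,B,B,A,A]" using ab tax by auto
    show ?thesis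
      by (rule use_inv[OF inv good_ax[OF inv ab tax(1-3)] _ mm]) (use ab tax in \<open>simp add: d_ABBAA Finv_def key_def mu2_def mu_ab_def phi_id_def phi_sw_def phi_ax_def phi_bo_def phi_ab_def r1_def tp_def tm_def\<close>)
  next
    case tbo
    have mm: "map \<tau> [A,B,B,A,A] \<noteq> rev [A,B,B,A,A]" using ab tbo by auto
    show ?thesis
      by (rule use_inv[OF inv good_bo[OF inv ab tbo(1-3)] _ mm]) (use ab tbo in \<open>simp add: d_ABBAA Finv_def key_def mu2_def mu_ab_def phi_id_def phi_sw_def phi_ax_def phi_bo_def phi_ab_def r1_def tp_def tm_def\<close>)
  qed
qed

lemma p_BBAAA:
  assumes inv: "\<tau> \<circ> \<tau> = id" and ab: "A \<noteq> B"
  shows "homot_skew_symmetric \<tau> [B,B,A,A,A] \<longleftrightarrow> contractible \<tau> [B,B,A,A,A] \<or> skew_symmetric \<tau> [B,B,A,A,A]"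
proof -
  consider (tid) "\<tau> A = A" "\<tau> B = B" | (tab) "\<tau> A = A" "\<tau> B \<noteq> B" "\<tau> B \<noteq> A"
   | (tsw) "\<tau> A = B" "\<tau> B = A"
   | (tax) "\<tau> A \<noteq> A" "\<tau> A \<noteq> B" "\<tau> B = B" "\<tau> B \<noteq> A"
   | (tbo) "\<tau> A \<noteq> A" "\<tau> A \<noteq> B" "\<tau> B \<noteq> B" "\<tau> B \<noteq> A" "\<tau> B \<noteq> \<tau> A"
    by (rule tcases[OF inv ab])
  then show ?thesis
  proof cases
    case tid
    show ?thesis by (rule final_C[OF inv], rule C_BBAAA) (use ab tid in simp_all)
  next
    case tab
    show ?thesis by (rule final_C[OF inv], rule C_BBAAA) (use ab tab in simp_all)
  next
    case tsw
    have mm: "map \<tau> [B,B,A,A,A] \<noteq> rev [B,B,A,A,A]" using ab tsw by auto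
    show ?thesis
      by (rule use_inv[OF inv good_sw[OF inv ab tsw(1)] _ mm]) (use ab tsw in \<open>simp add: d_BBAAA Finv_def key_def mu2_def mu_ab_def phi_id_def phi_sw_def phi_ax_def phi_bo_def phi_ab_def r1_def tp_def tm_def\<close>)
  next
    case tax
    have mm: "map \<tau> [B,B,A,A,A] \<noteq> rev [B,B,A,A,A]" using ab tax by auto
    show ?thesis
      by (rule use_inv[OF inv good_ax[OF inv ab tax(1-3)] _ mm]) (use ab tax in \<open>simp add: d_BBAAA Finv_def key_def mu2_def mu_ab_def phi_id_def phi_sw_def phi_ax_def phi_bo_def phi_ab_def r1_def tp_def tm_def\<close>)
  next
    case tbo
    have mm: "map \<tau> [B,B,A,A,A] \<noteq> rev [B,B,A,A,A]" using ab tbo by auto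
    show ?thesis
      by (rule use_inv[OF inv good_bo[OF inv ab tbo(1-3)] _ mm]) (use ab tbo in \<open>simp add: d_BBAAA Finv_def key_def mu2_def mu_ab_def phi_id_def phi_sw_def phi_ax_def phi_bo_def phi_ab_def r1_def tp_def tm_def\<close>)
  qed
qed

lemma p_ABABA:
  assumes inv: "\<tau> \<circ> \<tau> = id" and ab: "A \<noteq> B"
  shows "homot_skew_symmetric \<tau> [A,B,A,B,A] \<longleftrightarrow> contractible \<tau> [A,B,A,B,A] \<or> skew_symmetric \<tau> [A,B,A,B,A]"
proof -
  consider (tid) "\<tau> A = A" "\<tau> B = B" | (tab) "\<tau> A = A" "\<tau> B \<noteq> B" "\<tau> B \<noteq> A"
   | (tsw) "\<tau> A = B" "\<tau> B = A"
   | (tax) "\<tau> A \<noteq> A" "\<tau> A \<noteq> B" "\<tau> B = B" "\<tau> B \<noteq> A"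
   | (tbo) "\<tau> A \<noteq> A" "\<tau> A \<noteq> B" "\<tau> B \<noteq> B" "\<tau> B \<noteq> A" "\<tau> B \<noteq> \<tau> A"
    by (rule tcases[OF inv ab])
  then show ?thesis
  proof cases
    case tid
    show ?thesis by (rule final_S[OF inv], rule S_ABABA[OF inv]) (use ab tid in simp_all)
  next
    case tab
    have mm: "map \<tau> [A,B,A,B,A] \<noteq> rev [A,B,A,B,A]" using ab tab by auto
    show ?thesis
      by (rule use_inv[OF inv good_ab[OF inv ab tab(1-2)] _ mm]) (use ab tab in \<open>simp add: d_ABABA Finv_def key_def mu2_def mu_ab_def phi_id_def phi_sw_def phi_ax_def phi_bo_def phi_ab_def r1_def tp_def tm_def\<close>)
  next
    case tsw
    show ?thesis by (rule final_C[OF inv], rule C_ABABA) (use ab tsw in simp_all)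
  next
    case tax
    have mm: "map \<tau> [A,B,A,B,A] \<noteq> rev [A,B,A,B,A]" using ab tax by auto
    show ?thesis
      by (rule use_inv[OF inv good_ax[OF inv ab tax(1-3)] _ mm]) (use ab tax in \<open>simp add: d_ABABA Finv_def key_def mu2_def mu_ab_def phi_id_def phi_sw_def phi_ax_def phi_bo_def phi_ab_def r1_def tp_def tm_def\<close>)
  next
    case tbo
    have mm: "map \<tau> [A,B,A,B,A] \<noteq> rev [A,B,A,B,A]" using ab tbo by auto
    show ?thesis
      by (rule use_inv[OF inv good_bo[OF inv ab tbo(1-3)] _ mm]) (use ab tbo in \<open>simp add: d_ABABA Finv_def key_def mu2_def mu_ab_def phi_id_def phi_sw_def phi_ax_def phi_bo_def phi_ab_def r1_def tp_def tm_def\<close>)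
  qed
qed

lemma p_BAAAB:
  assumes inv: "\<tau> \<circ> \<tau> = id" and ab: "A \<noteq> B"
  shows "homot_skew_symmetric \<tau> [B,A,A,A,B] \<longleftrightarrow> contractible \<tau> [B,A,A,A,B] \<or> skew_symmetric \<tau> [B,A,A,A,B]"
proof -
  consider (tid) "\<tau> A = A" "\<tau> B = B" | (tab) "\<tau> A = A" "\<tau> B \<noteq> B" "\<tau> B \<noteq> A"
   | (tsw) "\<tau> A = B" "\<tau> B = A"
   | (tax) "\<tau> A \<noteq> A" "\<tau> A \<noteq> B" "\<tau> B = B" "\<tau> B \<noteq> A"
   | (tbo) "\<tau> A \<noteq> A" "\<tau> A \<noteq> B" "\<tau> B \<noteq> B" "\<tau> B \<noteq> A" "\<tau> B \<noteq> \<tau> A"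
    by (rule tcases[OF inv ab])
  then show ?thesis
  proof cases
    case tid
    show ?thesis by (rule final_S[OF inv], rule S_BAAAB[OF inv]) (use ab tid in simp_all)
  next
    case tab
    show ?thesis by (rule final_C[OF inv], rule C_BAAAB) (use ab tab in simp_all)
  next
    case tsw
    have mm: "map \<tau> [B,A,A,A,B] \<noteq> rev [B,A,A,A,B]" using ab tsw by auto
    show ?thesis
      by (rule use_inv[OF inv good_sw[OF inv ab tsw(1)] _ mm]) (use ab tsw in \<open>simp add: d_BAAAB Finv_def key_def mu2_def mu_ab_def phi_id_def phi_sw_def phi_ax_def phi_bo_def phi_ab_def r1_def tp_def tm_def\<close>)
  next
    case tax
    have mm: "map \<tau> [B,A,A,A,B] \<noteq> rev [B,A,A,A,B]" using ab tax by auto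
    show ?thesis
      by (rule use_inv[OF inv good_ax[OF inv ab tax(1-3)] _ mm]) (use ab tax in \<open>simp add: d_BAAAB Finv_def key_def mu2_def mu_ab_def phi_id_def phi_sw_def phi_ax_def phi_bo_def phi_ab_def r1_def tp_def tm_def\<close>)
  next
    case tbo
    have mm: "map \<tau> [B,A,A,A,B] \<noteq> rev [B,A,A,A,B]" using ab tbo by auto
    show ?thesis
      by (rule use_inv[OF inv good_bo[OF inv ab tbo(1-3)] _ mm]) (use ab tbo in \<open>simp add: d_BAAAB Finv_def key_def mu2_def mu_ab_def phi_id_def phi_sw_def phi_ax_def phi_bo_def phi_ab_def r1_def tp_def tm_def\<close>)
  qed
qed

lemma ex5: "length w = 5 \<Longrightarrow> \<exists>a b c d e. w = [a,b,c,d,e]"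
  by (simp add: length_Suc_conv numeral_eq_Suc) blast

lemma pat32:
  assumes "X \<noteq> Y" "a = X \<or> a = Y" "b = X \<or> b = Y" "c = X \<or> c = Y" "d = X \<or> d = Y" "e = X \<or> e = Y"
    and "count_list [a,b,c,d,e] X = 3"
  shows "[a,b,c,d,e] = [X,X,X,Y,Y] \<or> [a,b,c,d,e] = [X,X,Y,X,Y] \<or> [a,b,c,d,e] = [X,X,Y,Y,X]
     \<or> [a,b,c,d,e] = [X,Y,X,X,Y] \<or> [a,b,c,d,e] = [X,Y,X,Y,X] \<or> [a,b,c,d,e] = [X,Y,Y,X,X] \<or> [a,b,c,d,e] = [Y,X,X,X,Y] \<or> [a,b,c,d,e] = [Y,X,X,Y,X]
     \<or> [a,b,c,d,e] = [Y,X,Y,X,X] \<or> [a,b,c,d,e] = [Y,Y,X,X,X]"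
  using assms by (elim disjE; simp)

lemma cases5:
  assumes "length w = 5" "mult_one_free w"
  shows "(\<exists>A. w = [A,A,A,A,A]) \<or> (\<exists>A B. A \<noteq> B \<and> (w = [A,A,A,B,B] \<or> w = [A,A,B,A,B] \<or> w = [A,A,B,B,A]
     \<or> w = [A,B,A,A,B] \<or> w = [A,B,A,B,A] \<or> w = [A,B,B,A,A] \<or> w = [B,A,A,A,B] \<or> w = [B,A,A,B,A]
     \<or> w = [B,A,B,A,A] \<or> w = [B,B,A,A,A]))"
proof -
  obtain a b c d e where w: "w = [a,b,c,d,e]" using ex5[OF assms(1)] by blast
  have m: "\<forall>x\<in>set w. count_list w x \<ge> 2" using assms(2) by (simp add: mult_one_free_def)
  have fin: "finite (set w)" by simp
  have sum: "sum (count_list w) (set w) = 5" using sum_count_set[of w "set w"] assms(1) by simp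
  have "sum (\<lambda>x. 2) (set w) \<le> sum (count_list w) (set w)" using m by (intro sum_mono) auto
  then have "2 * card (set w) \<le> 5" using sum by simp
  then have card: "card (set w) \<le> 2" by simp
  have ne: "set w \<noteq> {}" using w by simp
  show ?thesis
  proof (cases "\<forall>x\<in>set w. x = a")
    case True
    then show ?thesis using w by auto
  next
    case False
    then obtain B where B: "B \<in> set w" "B \<noteq> a" by auto
    have aw: "a \<in> set w" using w by simp
    have sw: "set w = {a, B}"
    proof (rule ccontr)
      assume "set w \<noteq> {a, B}"
      then obtain z where "z \<in> set w" "z \<noteq> a" "z \<noteq> B" using aw B by auto
      then have "{a, B, z} \<subseteq> set w" using aw B by auto
      then have "card {a, B, z} \<le> card (set w)" by (rule card_mono[OF fin])
      then show False using card B \<open>z \<noteq> a\<close> \<open>z \<noteq> B\<close> by simp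
    qed
    have all: "x = a \<or> x = B" if "x \<in> set w" for x using that sw by auto
    have tot: "count_list w a + count_list w B = 5"
      using sum sw B(2) by simp
    have ca: "count_list w a \<ge> 2" "count_list w B \<ge> 2" using m aw B by auto
    obtain X Y where XY: "X \<noteq> Y" "\<forall>x\<in>set w. x = X \<or> x = Y" "count_list w X = 3" "{X, Y} = {a, B}"
    proof (cases "count_list w a = 3")
      case True then show ?thesis using that[of a B] B(2) all by auto
    next
      case False
      then have "count_list w B = 3" using tot ca by linarith
      then show ?thesis using that[of B a] B(2) all by auto
    qed
    have "a = X \<or> a = Y" "b = X \<or> b = Y" "c = X \<or> c = Y" "d = X \<or> d = Y" "e = X \<or> e = Y"
      using XY(2) w by auto
    from pat32[OF XY(1) this] XY(3) w have "w = [X,X,X,Y,Y] \<or> w = [X,X,Y,X,Y] \<or> w = [X,X,Y,Y,X]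
     \<or> w = [X,Y,X,X,Y] \<or> w = [X,Y,X,Y,X] \<or> w = [X,Y,Y,X,X] \<or> w = [Y,X,X,X,Y] \<or> w = [Y,X,X,Y,X]
     \<or> w = [Y,X,Y,X,X] \<or> w = [Y,Y,X,X,X]" by simp
    then show ?thesis using XY(1) by blast
  qed
qed

theorem corollary9p4:
  fixes \<tau> :: "'a \<Rightarrow> 'a" and w :: "'a list"
  assumes "\<tau> \<circ> \<tau> = id"
    and "length w = 5"
    and "mult_one_free w"
  shows "homot_skew_symmetric \<tau> w \<longleftrightarrow> contractible \<tau> w \<or> skew_symmetric \<tau> w"
proof -
  have c: "(\<exists>A. w = [A,A,A,A,A]) \<or> (\<exists>A B. A \<noteq> B \<and> (w = [A,A,A,B,B] \<or> w = [A,A,B,A,B] \<or> w = [A,A,B,B,A]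
     \<or> w = [A,B,A,A,B] \<or> w = [A,B,A,B,A] \<or> w = [A,B,B,A,A] \<or> w = [B,A,A,A,B] \<or> w = [B,A,A,B,A]
     \<or> w = [B,A,B,A,A] \<or> w = [B,B,A,A,A]))"
    by (rule cases5[OF assms(2,3)])
  show ?thesis
  proof (cases "\<exists>A. w = [A,A,A,A,A]")
    case True
    then obtain A where "w = [A,A,A,A,A]" by blast
    then show ?thesis using p_AAAAA[OF assms(1)] by simp
  next
    case False
    then obtain A B where ab: "A \<noteq> B" and ws: "w = [A,A,A,B,B] \<or> w = [A,A,B,A,B] \<or> w = [A,A,B,B,A]
     \<or> w = [A,B,A,A,B] \<or> w = [A,B,A,B,A] \<or> w = [A,B,B,A,A] \<or> w = [B,A,A,A,B] \<or> w = [B,A,A,B,A]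
     \<or> w = [B,A,B,A,A] \<or> w = [B,B,A,A,A]" using c by blast
    from ws show ?thesis
    proof (elim disjE)
    qed (simp_all add: p_AAABB[OF assms(1) ab] p_AABAB[OF assms(1) ab] p_AABBA[OF assms(1) ab]
        p_ABAAB[OF assms(1) ab] p_ABABA[OF assms(1) ab] p_ABBAA[OF assms(1) ab] p_BAAAB[OF assms(1) ab]
        p_BAABA[OF assms(1) ab] p_BABAA[OF assms(1) ab] p_BBAAA[OF assms(1) ab])
  qed
qed

end
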